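(* Let $\phi\in\mathrm{Diff}(\mathbb C^2,0)$ be such that $\sigma\circ\phi\circ\sigma=\phi^{\circ(-1)}$ and $h\circ\phi=h$ with $h(\xi)=\xi_1\xi_2$, with $\phi(\xi)=\Lambda\xi+\mathrm{h.o.t.}$ where $\Lambda=\mathrm{diag}(\lambda,\lambda^{-1})$ or $\Lambda=-\sigma$, and such that $\phi^{\circ p}$ is tangent to the identity for some $p\geq1$ and $\phi^{\circ p}\neq\mathrm{id}$. Let $\mathcal I$ be the ideal of $\mathbb C\{\xi\}$ generated by $f=\frac{\xi_1\circ\phi^{\circ p}-\xi_1}{\xi_1}$ and $\hat{\mathcal I}$ the ideal of $\mathbb C[[\xi]]$ generated by $f$. Then $\mathcal I$ and $\hat{\mathcal I}$ are invariant by composition with $\sigma$ and with $\phi$, i.e. $\mathcal I\circ\sigma=\mathcal I$, $\mathcal I\circ\phi=\mathcal I$, and likewise for $\hat{\mathcal I}$.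
   Context: $\sigma(\xi)=(\xi_2,\xi_1)$. $\mathcal I\circ g=\{a\circ g: a\in\mathcal I\}$. *)

theory Defs
  imports "HOL-Analysis.Analysis"
begin

text \<open>Points of C^2 are pairs (xi1, xi2). Germs at 0 are represented by functions
  on C^2 and compared by equality eventually in nhds 0.\<close>

definition sigma :: "complex \<times> complex \<Rightarrow> complex \<times> complex" where
  "sigma \<xi> = (snd \<xi>, fst \<xi>)"

definition hprod :: "complex \<times> complex \<Rightarrow> complex" where
  "hprod \<xi> = fst \<xi> * snd \<xi>"

definition expands_at0 :: "(nat \<times> nat \<Rightarrow> complex) \<Rightarrow> (complex \<times> complex \<Rightarrow> complex) \<Rightarrow> bool" where
  "expands_at0 c g \<longleftrightarrow> (\<exists>r>0. \<forall>z1 z2. norm z1 < r \<longrightarrow> norm z2 < r \<longrightarrow>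
      ((\<lambda>(i,j). c (i,j) * z1 ^ i * z2 ^ j) has_sum g (z1, z2)) UNIV)"

definition conv0 :: "(complex \<times> complex \<Rightarrow> complex) \<Rightarrow> bool" where
  "conv0 g \<longleftrightarrow> (\<exists>c. expands_at0 c g)"

definition taylor :: "(complex \<times> complex \<Rightarrow> complex) \<Rightarrow> (nat \<times> nat \<Rightarrow> complex)" where
  "taylor g = (SOME c. expands_at0 c g)"

text \<open>Ideal of C{xi} generated by f (as a set of representatives, closed under germ equality).\<close>
definition conv_ideal :: "(complex \<times> complex \<Rightarrow> complex) \<Rightarrow> (complex \<times> complex \<Rightarrow> complex) set" where
  "conv_ideal f = {g. conv0 g \<and> (\<exists>u. conv0 u \<and> (\<forall>\<^sub>F \<xi> in nhds 0. g \<xi> = u \<xi> * f \<xi>))}"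

definition germ_set_eq :: "('a::{zero,topological_space} \<Rightarrow> 'b) set \<Rightarrow> ('a \<Rightarrow> 'b) set \<Rightarrow> bool" where
  "germ_set_eq A B \<longleftrightarrow>
     (\<forall>a\<in>A. \<exists>b\<in>B. \<forall>\<^sub>F \<xi> in nhds 0. a \<xi> = b \<xi>) \<and> (\<forall>b\<in>B. \<exists>a\<in>A. \<forall>\<^sub>F \<xi> in nhds 0. a \<xi> = b \<xi>)"

type_synonym fps2 = "nat \<times> nat \<Rightarrow> complex"

definition fone :: fps2 where
  "fone = (\<lambda>(i,j). if i = 0 \<and> j = 0 then 1 else 0)"

definition fmult :: "fps2 \<Rightarrow> fps2 \<Rightarrow> fps2" where
  "fmult a b = (\<lambda>(m,n). \<Sum>i\<le>m. \<Sum>j\<le>n. a (i,j) * b (m - i, n - j))"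

definition fpow :: "fps2 \<Rightarrow> nat \<Rightarrow> fps2" where
  "fpow a k = (fmult a ^^ k) fone"

text \<open>Formal composition a(P,Q), meaningful when P, Q have zero constant term
  (then only monomials of total degree \<le> m+n contribute to coefficient (m,n)).\<close>
definition fcomp :: "fps2 \<Rightarrow> fps2 \<Rightarrow> fps2 \<Rightarrow> fps2" where
  "fcomp a P Q = (\<lambda>(m,n). \<Sum>i\<le>m+n. \<Sum>j\<le>m+n-i. a (i,j) * fmult (fpow P i) (fpow Q j) (m,n))"

definition fswap :: "fps2 \<Rightarrow> fps2" where
  "fswap a = (\<lambda>(i,j). a (j,i))"

definition formal_ideal :: "fps2 \<Rightarrow> fps2 set" where
  "formal_ideal F = {fmult u F | u. True}"

end

theory Submission
  imports Defs
begin
definition mon :: "fps2 \<Rightarrow> complex \<times> complex \<Rightarrow> nat \<times> nat \<Rightarrow> complex" where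
  "mon A z = (\<lambda>(m,n). A (m,n) * fst z ^ m * snd z ^ n)"
definition amaj :: "fps2 \<Rightarrow> real \<Rightarrow> nat \<times> nat \<Rightarrow> real" where
  "amaj A s = (\<lambda>(m,n). norm (A (m,n)) * s ^ (m+n))"
definition absc :: "fps2 \<Rightarrow> real \<Rightarrow> bool" where
  "absc A s \<longleftrightarrow> amaj A s summable_on UNIV"
definition Mj :: "fps2 \<Rightarrow> real \<Rightarrow> real" where
  "Mj A s = infsum (amaj A s) UNIV"
definition ev :: "fps2 \<Rightarrow> complex \<times> complex \<Rightarrow> complex" where
  "ev A z = infsum (mon A z) UNIV"
definition inpd :: "real \<Rightarrow> complex \<times> complex \<Rightarrow> bool" where
  "inpd s z \<longleftrightarrow> norm (fst z) \<le> s \<and> norm (snd z) \<le> s"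

lemma amaj_nonneg: "s \<ge> 0 \<Longrightarrow> amaj A s x \<ge> 0"
  by (auto simp: amaj_def split: prod.splits)

lemma Mj_nonneg: "s \<ge> 0 \<Longrightarrow> Mj A s \<ge> 0"
  unfolding Mj_def by (rule infsum_nonneg) (simp add: amaj_nonneg)

lemma norm_mono_le: "inpd s z \<Longrightarrow> norm (mon A z x) \<le> amaj A s x"
proof -
  assume a: "inpd s z"
  obtain m n where x: "x = (m,n)" by force
  have s0: "s \<ge> 0" using a unfolding inpd_def by (meson norm_ge_zero order_trans)
  have "norm (fst z ^ m) \<le> s ^ m" "norm (snd z ^ n) \<le> s ^ n"
    using a by (auto simp: inpd_def norm_power intro: power_mono)
  then have "norm (fst z ^ m) * norm (snd z ^ n) \<le> s^m * s^n"
    using s0 by (intro mult_mono) auto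
  then show ?thesis unfolding x mon_def amaj_def
    by (simp add: norm_mult power_add mult.assoc mult_left_mono)
qed

lemma ev_abs_summable: "absc A s \<Longrightarrow> inpd s z \<Longrightarrow> (\<lambda>x. norm (mon A z x)) summable_on UNIV"
  unfolding absc_def
  by (rule summable_on_comparison_test[where f="amaj A s"]) (auto intro: norm_mono_le)

lemma ev_summable: "absc A s \<Longrightarrow> inpd s z \<Longrightarrow> mon A z summable_on UNIV"
  using ev_abs_summable abs_summable_summable by blast

lemma ev_has_sum: "absc A s \<Longrightarrow> inpd s z \<Longrightarrow> (mon A z has_sum ev A z) UNIV"
  unfolding ev_def by (rule has_sum_infsum, rule ev_summable)

lemma Mj_has_sum: "absc A s \<Longrightarrow> (amaj A s has_sum Mj A s) UNIV"
  unfolding Mj_def absc_def by (rule has_sum_infsum)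

lemma norm_ev_le: "absc A s \<Longrightarrow> inpd s z \<Longrightarrow> norm (ev A z) \<le> Mj A s"
  by (rule norm_infsum_le[OF ev_has_sum Mj_has_sum]) (auto intro: norm_mono_le)

lemma amaj_mono: "0 \<le> t \<Longrightarrow> t \<le> s \<Longrightarrow> amaj A t x \<le> amaj A s x"
  by (auto simp: amaj_def split: prod.splits intro!: mult_left_mono power_mono)

lemma absc_mono: "absc A s \<Longrightarrow> 0 \<le> t \<Longrightarrow> t \<le> s \<Longrightarrow> absc A t"
  unfolding absc_def
  by (rule summable_on_comparison_test[where f="amaj A s"]) (auto intro: amaj_mono amaj_nonneg)

lemma Mj_mono: "absc A s \<Longrightarrow> 0 \<le> t \<Longrightarrow> t \<le> s \<Longrightarrow> Mj A t \<le> Mj A s"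
  unfolding Mj_def using absc_mono[of A s t]
  by (intro infsum_mono) (auto simp: absc_def intro: amaj_mono)

lemma SUM:
  fixes R :: "'k \<Rightarrow> fps2"
  assumes s: "s > 0" and Ra: "\<And>k. absc (R k) s" and Rs: "(\<lambda>k. Mj (R k) s) summable_on UNIV"
  shows "\<And>mn. ((\<lambda>k. R k mn) has_sum (\<Sum>\<^sub>\<infinity>k. R k mn)) UNIV"
    and "absc (\<lambda>mn. \<Sum>\<^sub>\<infinity>k. R k mn) s"
    and "Mj (\<lambda>mn. \<Sum>\<^sub>\<infinity>k. R k mn) s \<le> (\<Sum>\<^sub>\<infinity>k. Mj (R k) s)"
    and "\<And>z. inpd s z \<Longrightarrow> ((\<lambda>k. ev (R k) z) has_sum ev (\<lambda>mn. \<Sum>\<^sub>\<infinity>k. R k mn) z) UNIV"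
proof -
  define S where "S = (\<lambda>mn. \<Sum>\<^sub>\<infinity>k. R k mn)"
  define T where "T = (\<lambda>(k, mn). amaj (R k) s mn)"
  have Tnn: "T x \<ge> 0" for x using s by (auto simp: T_def amaj_nonneg split: prod.splits)
  have "T summable_on Sigma UNIV (\<lambda>_. UNIV)"
    by (rule summable_on_SigmaI[where g="\<lambda>k. Mj (R k) s"])
       (use Ra Rs Mj_has_sum Tnn in \<open>auto simp: T_def\<close>)
  then have Tsum: "T summable_on UNIV" by simp
  define Ttot where "Ttot = infsum T UNIV"
  have Thas: "(T has_sum Ttot) (UNIV \<times> UNIV)" using Tsum Ttot_def by simp
  have Rowhas: "((\<lambda>k. Mj (R k) s) has_sum Ttot) UNIV"
    by (rule has_sum_SigmaD[OF Thas[unfolded Sigma_def[symmetric]]])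
       (use Mj_has_sum Ra in \<open>auto simp: T_def\<close>)
  define T' where "T' = (\<lambda>(mn, k). T (k, mn))"
  have T'has: "(T' has_sum Ttot) (UNIV \<times> UNIV)"
    unfolding T'_def by (rule has_sum_swap[THEN iffD1, OF Thas])
  have colsum: "(\<lambda>k. T' (mn, k)) summable_on UNIV" for mn
    using summable_on_SigmaD1[of "\<lambda>a b. T' (a,b)" UNIV "\<lambda>_. UNIV" mn] T'has
    by (auto simp: has_sum_imp_summable)
  define C where "C = (\<lambda>mn. \<Sum>\<^sub>\<infinity>k. T' (mn, k))"
  have Chas: "(C has_sum Ttot) UNIV"
    by (rule has_sum_SigmaD[OF T'has[unfolded Sigma_def[symmetric]]])
       (use colsum in \<open>auto simp: C_def\<close>)
  have Rcol_abs: "(\<lambda>k. norm (R k mn)) summable_on UNIV" for mn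
  proof -
    obtain m n where mn: "mn = (m,n)" by force
    have "(\<lambda>k. T' (mn, k) * inverse (s ^ (m+n))) summable_on UNIV"
      using colsum[of mn] summable_on_cmult_left by blast
    moreover have "T' (mn, k) * inverse (s ^ (m+n)) = norm (R k mn)" for k
      using s by (simp add: T'_def T_def amaj_def mn)
    ultimately show ?thesis by simp
  qed
  have Rcol: "(\<lambda>k. R k mn) summable_on UNIV" for mn
    by (rule abs_summable_summable[OF Rcol_abs])
  show Rhas: "((\<lambda>k. R k mn) has_sum (\<Sum>\<^sub>\<infinity>k. R k mn)) UNIV" for mn
    using Rcol by simp
  have Sle: "amaj S s mn \<le> C mn" for mn
  proof -
    obtain m n where mn: "mn = (m,n)" by force
    have "norm (S mn) \<le> (\<Sum>\<^sub>\<infinity>k. norm (R k mn))"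
      unfolding S_def by (rule norm_infsum_le[OF Rhas has_sum_infsum[OF Rcol_abs]]) simp
    then have "norm (S mn) * s^(m+n) \<le> (\<Sum>\<^sub>\<infinity>k. norm (R k mn)) * s^(m+n)"
      using s by (simp add: mult_right_mono)
    also have "\<dots> = (\<Sum>\<^sub>\<infinity>k. norm (R k mn) * s^(m+n))"
      by (simp add: infsum_cmult_left')
    also have "\<dots> = C mn" by (simp add: C_def T'_def T_def amaj_def mn)
    finally show ?thesis by (simp add: amaj_def mn)
  qed
  have Cnn: "C mn \<ge> 0" for mn unfolding C_def
    by (rule infsum_nonneg) (simp add: T'_def Tnn)
  show absS: "absc (\<lambda>mn. \<Sum>\<^sub>\<infinity>k. R k mn) s"
    unfolding absc_def S_def[symmetric]
    by (rule summable_on_comparison_test[OF has_sum_imp_summable[OF Chas]])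
       (use Sle s amaj_nonneg in auto)
  have "Mj S s \<le> Ttot"
    unfolding Mj_def
    using infsum_mono[OF absS[unfolded S_def[symmetric] absc_def] has_sum_imp_summable[OF Chas]] Sle
      infsumI[OF Chas] by auto
  then show "Mj (\<lambda>mn. \<Sum>\<^sub>\<infinity>k. R k mn) s \<le> (\<Sum>\<^sub>\<infinity>k. Mj (R k) s)"
    using infsumI[OF Rowhas] by (simp add: S_def)
  fix z assume z: "inpd s z"
  define F where "F = (\<lambda>(k, mn). mon (R k) z mn)"
  have Fabs: "(\<lambda>x. norm (F x)) summable_on UNIV"
    by (rule summable_on_comparison_test[OF Tsum])
       (use z norm_mono_le in \<open>auto simp: F_def T_def split: prod.splits\<close>)
  have "F summable_on UNIV" using Fabs abs_summable_summable by blast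
  then obtain V where Fhas: "(F has_sum V) (UNIV \<times> UNIV)" by (auto simp: summable_on_def)
  have rows: "((\<lambda>k. ev (R k) z) has_sum V) UNIV"
    by (rule has_sum_SigmaD[OF Fhas[unfolded Sigma_def[symmetric]]])
       (use ev_has_sum[OF Ra z] in \<open>auto simp: F_def\<close>)
  have F'has: "((\<lambda>(mn,k). F (k,mn)) has_sum V) (UNIV \<times> UNIV)"
    by (rule has_sum_swap[THEN iffD1, OF Fhas])
  have cols: "(mon S z has_sum V) UNIV"
  proof (rule has_sum_SigmaD[OF F'has[unfolded Sigma_def[symmetric]]])
    fix mn :: "nat \<times> nat"
    obtain m n where mn: "mn = (m,n)" by force
    have "((\<lambda>k. R k mn * (fst z ^ m * snd z ^ n)) has_sum (S mn * (fst z ^ m * snd z ^ n))) UNIV"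
      unfolding S_def by (rule has_sum_cmult_left[OF Rhas])
    then show "((\<lambda>k. case (mn, k) of (mn, k) \<Rightarrow> F (k, mn)) has_sum mon S z mn) UNIV"
      by (simp add: F_def mon_def mn mult.assoc)
  qed
  show "((\<lambda>k. ev (R k) z) has_sum ev (\<lambda>mn. \<Sum>\<^sub>\<infinity>k. R k mn) z) UNIV"
    using rows infsumI[OF cols] by (simp add: ev_def S_def)
qed

definition shiftc :: "nat \<Rightarrow> nat \<Rightarrow> (nat \<times> nat \<Rightarrow> 'a::zero) \<Rightarrow> nat \<times> nat \<Rightarrow> 'a" where
  "shiftc i j A = (\<lambda>(m,n). if i \<le> m \<and> j \<le> n then A (m-i, n-j) else 0)"

lemma has_sum_shift:
  fixes f :: "nat \<times> nat \<Rightarrow> 'a::{comm_monoid_add, topological_space}"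
  assumes "(f has_sum x) UNIV"
  shows "(shiftc i j f has_sum x) UNIV"
proof -
  define h where "h = (\<lambda>(m::nat,n::nat). (m+i, n+j))"
  have inj: "inj_on h UNIV" by (auto simp: h_def inj_on_def)
  have "((shiftc i j f \<circ> h) has_sum x) UNIV"
    using assms by (simp add: shiftc_def h_def o_def case_prod_unfold)
  then have "(shiftc i j f has_sum x) (h ` UNIV)" using has_sum_reindex[OF inj] by blast
  moreover have "h ` UNIV = {(m,n). i \<le> m \<and> j \<le> n}"
    by (auto simp: h_def image_def) (metis le_add_diff_inverse2)+
  ultimately show ?thesis
    by (subst has_sum_cong_neutral[where T="h ` UNIV" and g="shiftc i j f"]) (auto simp: shiftc_def)
qed

lemma shiftc_infsum:
  fixes f :: "nat \<times> nat \<Rightarrow> complex"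
  shows "f summable_on UNIV \<Longrightarrow> infsum (shiftc i j f) UNIV = infsum f UNIV"
  using has_sum_shift[of f "infsum f UNIV" i j] by (simp add: infsumI)

lemma fmult_as_infsum:
  "fmult A B mn = (\<Sum>\<^sub>\<infinity>k. A k * shiftc (fst k) (snd k) B mn)"
proof -
  obtain m n where mn: "mn = (m,n)" by force
  have fin: "finite ({..m} \<times> {..n})" by simp
  have "(\<Sum>\<^sub>\<infinity>k. A k * shiftc (fst k) (snd k) B mn) = (\<Sum>k\<in>{..m} \<times> {..n}. A k * shiftc (fst k) (snd k) B mn)"
    by (subst infsum_cong_neutral[where T="{..m} \<times> {..n}" and g="\<lambda>k. A k * shiftc (fst k) (snd k) B mn"])
       (auto simp: shiftc_def mn)
  also have "\<dots> = (\<Sum>i\<le>m. \<Sum>j\<le>n. A (i,j) * B (m - i, n - j))"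
    by (auto simp: sum.cartesian_product shiftc_def mn case_prod_unfold intro!: sum.cong)
  finally show ?thesis by (simp add: fmult_def mn)
qed

lemma PROD:
  assumes s: "s > 0" and A: "absc A s" and B: "absc B s"
  shows "absc (fmult A B) s" "Mj (fmult A B) s \<le> Mj A s * Mj B s"
    "\<And>z. inpd s z \<Longrightarrow> ev (fmult A B) z = ev A z * ev B z"
proof -
  define R where "R = (\<lambda>k mn. A k * shiftc (fst k) (snd k) B mn)"
  have Rmaj: "amaj (R k) s = (\<lambda>mn. amaj A s k * shiftc (fst k) (snd k) (amaj B s) mn)" for k
  proof
    fix mn :: "nat \<times> nat"
    obtain i j where k: "k = (i,j)" by force
    obtain m n where mn: "mn = (m,n)" by force
    show "amaj (R k) s mn = amaj A s k * shiftc (fst k) (snd k) (amaj B s) mn"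
    proof (cases "i \<le> m \<and> j \<le> n")
      case True
      then have "s ^ (m+n) = s^(i+j) * s^((m-i)+(n-j))" by (simp flip: power_add)
      then show ?thesis using True
        by (simp add: R_def amaj_def shiftc_def k mn norm_mult mult_ac add.commute[of j i])
    qed (auto simp: R_def amaj_def shiftc_def k mn)
  qed
  have Rhas: "(amaj (R k) s has_sum (amaj A s k * Mj B s)) UNIV" for k
    unfolding Rmaj
    by (rule has_sum_cmult_right, rule has_sum_shift, rule Mj_has_sum[OF B])
  have Ra: "absc (R k) s" for k using Rhas[of k] by (auto simp: absc_def has_sum_imp_summable)
  have RMj: "Mj (R k) s = amaj A s k * Mj B s" for k using Rhas[of k] by (simp add: Mj_def infsumI)
  have Rs_has: "((\<lambda>k. Mj (R k) s) has_sum (Mj A s * Mj B s)) UNIV"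
    unfolding RMj by (rule has_sum_cmult_left, rule Mj_has_sum[OF A])
  have Rs: "(\<lambda>k. Mj (R k) s) summable_on UNIV" using Rs_has by (rule has_sum_imp_summable)
  have Seq: "(\<lambda>mn. \<Sum>\<^sub>\<infinity>k. R k mn) = fmult A B"
    by (rule ext) (simp add: fmult_as_infsum R_def)
  note SS = SUM[OF s Ra Rs, unfolded Seq]
  show "absc (fmult A B) s" by (rule SS(2))
  show "Mj (fmult A B) s \<le> Mj A s * Mj B s" using SS(3) infsumI[OF Rs_has] by simp
  fix z assume z: "inpd s z"
  have evR: "ev (R k) z = mon A z k * ev B z" for k
  proof -
    obtain i j where k: "k = (i,j)" by force
    have "mon (R k) z = (\<lambda>mn. mon A z k * shiftc i j (mon B z) mn)"
    proof
      fix mn :: "nat \<times> nat"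
      obtain m n where mn: "mn = (m,n)" by force
      show "mon (R k) z mn = mon A z k * shiftc i j (mon B z) mn"
      proof (cases "i \<le> m \<and> j \<le> n")
        case True
        then have "fst z ^ m = fst z ^ i * fst z ^ (m-i)" "snd z ^ n = snd z ^ j * snd z ^ (n-j)"
          by (simp_all flip: power_add)
        then show ?thesis using True
          by (simp add: R_def mon_def shiftc_def k mn mult_ac)
      qed (auto simp: R_def mon_def shiftc_def k mn)
    qed
    moreover have "((\<lambda>mn. mon A z k * shiftc i j (mon B z) mn) has_sum (mon A z k * ev B z)) UNIV"
      by (rule has_sum_cmult_right, rule has_sum_shift, rule ev_has_sum[OF B z])
    ultimately show ?thesis by (simp add: ev_def infsumI)
  qed
  have "((\<lambda>k. ev (R k) z) has_sum (ev A z * ev B z)) UNIV"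
    unfolding evR by (rule has_sum_cmult_left, rule ev_has_sum[OF A z])
  then show "ev (fmult A B) z = ev A z * ev B z"
    using SS(4)[OF z] has_sum_unique by blast
qed

lemma fin_supp:
  assumes fin: "finite B" and out: "\<And>mn. mn \<notin> B \<Longrightarrow> A mn = 0"
  shows "absc A s" "Mj A s = sum (amaj A s) B"
    "ev A z = sum (mon A z) B"
proof -
  have h1: "(amaj A s has_sum sum (amaj A s) B) UNIV"
    by (rule has_sum_finite_neutralI[OF fin]) (auto simp: amaj_def out split: prod.splits)
  then show "absc A s" by (auto simp: absc_def has_sum_imp_summable)
  show "Mj A s = sum (amaj A s) B" using h1 by (simp add: Mj_def infsumI)
  have "(mon A z has_sum sum (mon A z) B) UNIV"
    by (rule has_sum_finite_neutralI[OF fin]) (auto simp: mon_def out split: prod.splits)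
  then show "ev A z = sum (mon A z) B" by (simp add: ev_def infsumI)
qed

lemma ev_zero: "ev A 0 = A (0,0)"
proof -
  have "(mon A 0 has_sum sum (mon A 0) {(0,0)}) UNIV"
    by (rule has_sum_finite_neutralI[where B="{(0,0)}"]) (auto simp: mon_def zero_prod_def)
  then show ?thesis by (simp add: ev_def infsumI mon_def zero_prod_def)
qed

definition cst :: "complex \<Rightarrow> fps2" where "cst c = (\<lambda>mn. if mn = (0,0) then c else 0)"
definition fX :: fps2 where "fX = (\<lambda>mn. if mn = (1,0) then 1 else 0)"
definition fY :: fps2 where "fY = (\<lambda>mn. if mn = (0,1) then 1 else 0)"

lemma cst_props: "absc (cst c) s" "Mj (cst c) s = norm c" "ev (cst c) z = c"
proof -
  have f: "finite {(0::nat,0::nat)}" "\<And>mn. mn \<notin> {(0,0)} \<Longrightarrow> cst c mn = 0" by (auto simp: cst_def)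
  show "absc (cst c) s" by (rule fin_supp(1)[OF f])
  show "Mj (cst c) s = norm c" using fin_supp(2)[OF f] by (simp add: amaj_def cst_def)
  show "ev (cst c) z = c" using fin_supp(3)[OF f] by (simp add: mon_def cst_def)
qed

lemma fone_cst: "fone = cst 1" by (auto simp: fone_def cst_def)

lemma fX_props: "absc fX s" "Mj fX s = s" "ev fX z = fst z"
proof -
  have f: "finite {(1::nat,0::nat)}" "\<And>mn. mn \<notin> {(1,0)} \<Longrightarrow> fX mn = 0" by (auto simp: fX_def)
  show "absc fX s" by (rule fin_supp(1)[OF f])
  show "Mj fX s = s" using fin_supp(2)[OF f] by (simp add: amaj_def fX_def)
  show "ev fX z = fst z" using fin_supp(3)[OF f] by (simp add: mon_def fX_def)
qed

lemma fY_props: "absc fY s" "Mj fY s = s" "ev fY z = snd z"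
proof -
  have f: "finite {(0::nat,1::nat)}" "\<And>mn. mn \<notin> {(0,1)} \<Longrightarrow> fY mn = 0" by (auto simp: fY_def)
  show "absc fY s" by (rule fin_supp(1)[OF f])
  show "Mj fY s = s" using fin_supp(2)[OF f] by (simp add: amaj_def fY_def)
  show "ev fY z = snd z" using fin_supp(3)[OF f] by (simp add: mon_def fY_def)
qed

lemma ADD:
  assumes s: "s \<ge> 0" and A: "absc A s" and B: "absc B s"
  shows "absc (\<lambda>mn. A mn + B mn) s" "Mj (\<lambda>mn. A mn + B mn) s \<le> Mj A s + Mj B s"
    "\<And>z. inpd s z \<Longrightarrow> ev (\<lambda>mn. A mn + B mn) z = ev A z + ev B z"
proof -
  have le: "amaj (\<lambda>mn. A mn + B mn) s x \<le> amaj A s x + amaj B s x" for x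
    using s by (auto simp: amaj_def split: prod.splits simp flip: distrib_right
        intro!: mult_right_mono norm_triangle_ineq)
  have sAB: "(\<lambda>x. amaj A s x + amaj B s x) summable_on UNIV"
    using A B by (auto simp: absc_def intro: summable_on_add)
  show ab: "absc (\<lambda>mn. A mn + B mn) s"
    unfolding absc_def
    by (rule summable_on_comparison_test[OF sAB]) (use le s amaj_nonneg in auto)
  show "Mj (\<lambda>mn. A mn + B mn) s \<le> Mj A s + Mj B s"
    unfolding Mj_def using A B ab le
    by (subst infsum_add[symmetric]) (auto simp: absc_def intro!: infsum_mono summable_on_add)
  fix z assume "inpd s z"
  then show "ev (\<lambda>mn. A mn + B mn) z = ev A z + ev B z"
    unfolding ev_def using ev_summable[OF A] ev_summable[OF B]
    by (subst infsum_add[symmetric]) (auto simp: mon_def case_prod_unfold distrib_right)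
qed

lemma SCALE:
  assumes A: "absc A s"
  shows "absc (\<lambda>mn. c * A mn) s" "Mj (\<lambda>mn. c * A mn) s = norm c * Mj A s"
    "ev (\<lambda>mn. c * A mn) z = c * ev A z"
proof -
  have e: "amaj (\<lambda>mn. c * A mn) s = (\<lambda>x. norm c * amaj A s x)"
    by (auto simp: amaj_def norm_mult)
  show "absc (\<lambda>mn. c * A mn) s" using A unfolding absc_def e by (rule summable_on_cmult_right)
  show "Mj (\<lambda>mn. c * A mn) s = norm c * Mj A s" unfolding Mj_def e by (rule infsum_cmult_right')
  have "mon (\<lambda>mn. c * A mn) z = (\<lambda>x. c * mon A z x)" by (auto simp: mon_def)
  then show "ev (\<lambda>mn. c * A mn) z = c * ev A z" unfolding ev_def by (simp add: infsum_cmult_right')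
qed

lemma DIFF:
  assumes s: "s \<ge> 0" and A: "absc A s" and B: "absc B s"
  shows "absc (\<lambda>mn. A mn - B mn) s" "Mj (\<lambda>mn. A mn - B mn) s \<le> Mj A s + Mj B s"
    "\<And>z. inpd s z \<Longrightarrow> ev (\<lambda>mn. A mn - B mn) z = ev A z - ev B z"
proof -
  have e: "(\<lambda>mn. A mn - B mn) = (\<lambda>mn. A mn + (\<lambda>mn. (-1) * B mn) mn)" by auto
  note B' = SCALE[OF B, where c="-1"]
  show "absc (\<lambda>mn. A mn - B mn) s" unfolding e by (rule ADD(1)[OF s A B'(1)])
  show "Mj (\<lambda>mn. A mn - B mn) s \<le> Mj A s + Mj B s" unfolding e using ADD(2)[OF s A B'(1)] B'(2) by simp
  fix z assume "inpd s z"
  then show "ev (\<lambda>mn. A mn - B mn) z = ev A z - ev B z" unfolding e using ADD(3)[OF s A B'(1)] B'(3)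
    by simp
qed

lemma SUMF:
  assumes s: "s \<ge> 0" and fin: "finite I" and A: "\<And>i. i \<in> I \<Longrightarrow> absc (A i) s"
  shows "absc (\<lambda>mn. \<Sum>i\<in>I. A i mn) s \<and> Mj (\<lambda>mn. \<Sum>i\<in>I. A i mn) s \<le> (\<Sum>i\<in>I. Mj (A i) s) \<and>
    (\<forall>z. inpd s z \<longrightarrow> ev (\<lambda>mn. \<Sum>i\<in>I. A i mn) z = (\<Sum>i\<in>I. ev (A i) z))"
  using fin A
proof (induction I rule: finite_induct)
  case empty
  have e: "(\<lambda>mn. \<Sum>i\<in>{}. A i mn) = cst 0" by (auto simp: cst_def)
  show ?case unfolding e by (simp add: cst_props)
next
  case (insert x F)
  have Ax: "absc (A x) s" using insert by auto
  have IH: "absc (\<lambda>mn. \<Sum>i\<in>F. A i mn) s" "Mj (\<lambda>mn. \<Sum>i\<in>F. A i mn) s \<le> (\<Sum>i\<in>F. Mj (A i) s)"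
    "\<And>z. inpd s z \<Longrightarrow> ev (\<lambda>mn. \<Sum>i\<in>F. A i mn) z = (\<Sum>i\<in>F. ev (A i) z)"
    using insert by auto
  have e: "(\<lambda>mn. \<Sum>i\<in>insert x F. A i mn) = (\<lambda>mn. A x mn + (\<lambda>mn. \<Sum>i\<in>F. A i mn) mn)"
    using insert by auto
  show ?case unfolding e using ADD[OF s Ax IH(1)] IH insert by auto
qed

lemma ord_fmult:
  assumes "\<And>m n. m + n < a \<Longrightarrow> A (m,n) = 0" "\<And>m n. m + n < b \<Longrightarrow> B (m,n) = 0" "m + n < a + b"
  shows "fmult A B (m,n) = 0"
  unfolding fmult_def prod.case
proof (intro sum.neutral ballI)
  fix i j assume ij: "i \<in> {..m}" "j \<in> {..n}"
  show "A (i, j) * B (m - i, n - j) = 0"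
  proof (cases "i + j < a")
    case True then show ?thesis using assms(1) by simp
  next
    case False
    then have "(m - i) + (n - j) < b" using ij assms(3) by auto
    then show ?thesis using assms(2) by simp
  qed
qed

lemma fpow_0[simp]: "fpow A 0 = fone" by (simp add: fpow_def)
lemma fpow_Suc: "fpow A (Suc k) = fmult A (fpow A k)" by (simp add: fpow_def)

lemma ord_fpow:
  assumes "A (0,0) = 0" shows "m + n < k \<Longrightarrow> fpow A k (m,n) = 0"
proof (induction k arbitrary: m n)
  case 0 then show ?case by simp
next
  case (Suc k)
  show ?case unfolding fpow_Suc
    by (rule ord_fmult[where a=1 and b=k]) (use assms Suc in auto)
qed

lemma POW:
  assumes s: "s > 0" and A: "absc A s"
  shows "absc (fpow A k) s \<and> Mj (fpow A k) s \<le> Mj A s ^ k \<and> (\<forall>z. inpd s z \<longrightarrow> ev (fpow A k) z = ev A z ^ k)"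
proof (induction k)
  case 0 then show ?case by (simp add: fone_cst cst_props)
next
  case (Suc k)
  then have P: "absc (fpow A k) s" "Mj (fpow A k) s \<le> Mj A s ^ k" by auto
  have "Mj A s * Mj (fpow A k) s \<le> Mj A s * Mj A s ^ k"
    using P(2) Mj_nonneg[of s A] s by (intro mult_left_mono) auto
  then show ?case unfolding fpow_Suc using PROD[OF s A P(1)] Suc by auto
qed

lemma SMALL:
  assumes A: "absc A s0" and s0: "s0 > 0" and t: "0 \<le> t" "t \<le> s0" and A0: "A (0,0) = 0"
  shows "Mj A t \<le> t / s0 * Mj A s0"
proof -
  have le: "amaj A t x \<le> t / s0 * amaj A s0 x" for x
  proof -
    obtain m n where x: "x = (m,n)" by force
    show ?thesis
    proof (cases "m + n = 0")
      case True then show ?thesis using A0 x by (simp add: amaj_def)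
    next
      case False
      then obtain k where k: "m + n = Suc k" using not0_implies_Suc by blast
      have "t ^ k \<le> s0 ^ k" using t by (intro power_mono) auto
      then have "t * t^k \<le> t * s0 ^ k" using t by (intro mult_left_mono) auto
      also have "\<dots> = t / s0 * (s0 * s0^k)" using s0 by simp
      finally have "t ^ (m+n) \<le> t / s0 * s0 ^ (m+n)" unfolding k by simp
      then have "norm (A (m,n)) * t ^ (m+n) \<le> norm (A (m,n)) * (t / s0 * s0 ^ (m+n))"
        by (intro mult_left_mono) auto
      then show ?thesis unfolding x amaj_def by (simp add: mult_ac)
    qed
  qed
  have sm: "(\<lambda>x. t / s0 * amaj A s0 x) summable_on UNIV"
    by (rule summable_on_cmult_right) (use A in \<open>simp add: absc_def\<close>)
  have "Mj A t \<le> (\<Sum>\<^sub>\<infinity>x. t / s0 * amaj A s0 x)"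
    unfolding Mj_def using absc_mono[OF A t(1,2)] le
    by (intro infsum_mono[OF _ sm]) (auto simp: absc_def)
  also have "\<dots> = t / s0 * Mj A s0" unfolding Mj_def by (rule infsum_cmult_right')
  finally show ?thesis .
qed

lemma NEAR0:
  assumes A: "absc A s" and s: "s > 0" and t: "0 \<le> t" "t \<le> s" and z: "inpd t z"
  shows "norm (ev A z - A (0,0)) \<le> t / s * Mj A s"
proof -
  define A' where "A' = (\<lambda>mn. A mn - cst (A (0,0)) mn)"
  have A'a: "absc A' s" unfolding A'_def by (rule DIFF(1)[OF _ A cst_props(1)]) (use s in auto)
  have zs: "inpd s z" using z t by (auto simp: inpd_def)
  have e1: "ev A' z = ev A z - A (0,0)" unfolding A'_def
    using DIFF(3)[OF _ A cst_props(1) zs] s cst_props(3) by auto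
  moreover have "norm (ev A' z) \<le> Mj A' t" by (rule norm_ev_le[OF absc_mono[OF A'a t] z])
  moreover have "Mj A' t \<le> t / s * Mj A' s" by (rule SMALL[OF A'a s t]) (simp add: A'_def cst_def)
  moreover have "Mj A' s \<le> Mj A s"
    unfolding Mj_def using A'a A
    by (intro infsum_mono) (auto simp: absc_def amaj_def A'_def cst_def split: prod.splits)
  moreover have "t / s * Mj A' s \<le> t / s * Mj A s"
    using calculation(4) t s by (intro mult_left_mono) auto
  ultimately show ?thesis unfolding e1[symmetric] by linarith
qed

lemma has_sum_diff':
  fixes f g :: "'a \<Rightarrow> 'b::{topological_ab_group_add}"
  assumes "(f has_sum a) A" "(g has_sum b) A"
  shows "((\<lambda>x. f x - g x) has_sum (a - b)) A"
proof -
  have "((\<lambda>x. - g x) has_sum (- b)) A" using assms(2) has_sum_uminus by fastforce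
  from has_sum_add[OF assms(1) this] show ?thesis by simp
qed

lemma SMALL_choose:
  assumes A: "absc A s0" and s0: "s0 > 0" and A0: "A (0,0) = 0" and e: "e > 0"
  shows "\<exists>s>0. s \<le> s0 \<and> Mj A s \<le> e"
proof -
  define M where "M = Mj A s0"
  have M0: "M \<ge> 0" using Mj_nonneg s0 by (simp add: M_def)
  define s where "s = s0 * e / (M + e)"
  have sp: "s > 0" using s0 e M0 by (simp add: s_def)
  have ss0: "s \<le> s0" using s0 e M0 by (simp add: s_def field_simps)
  have "Mj A s \<le> s / s0 * M" unfolding M_def by (rule SMALL[OF A s0 _ ss0 A0]) (use sp in auto)
  also have "\<dots> = e * M / (M + e)" using s0 by (simp add: s_def)
  also have "\<dots> \<le> e" using e M0 by (simp add: field_simps)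
  finally show ?thesis using sp ss0 by blast
qed

lemma SMALL_choose2:
  assumes A: "absc A s0" and s0: "s0 > 0" and A0: "A (0,0) = 0" and e: "e > 0"
  shows "\<exists>s>0. s \<le> s0 \<and> (\<forall>t. 0 \<le> t \<and> t \<le> s \<longrightarrow> Mj A t \<le> e)"
proof -
  obtain s where s: "s > 0" "s \<le> s0" "Mj A s \<le> e" using SMALL_choose[OF assms] by blast
  have "Mj A t \<le> e" if "0 \<le> t" "t \<le> s" for t
    using Mj_mono[OF absc_mono[OF A _ s(2)] that] s by auto
  then show ?thesis using s by blast
qed

lemma fcomp_as_infsum:
  assumes P0: "P (0,0) = 0" and Q0: "Q (0,0) = 0"
  shows "fcomp c P Q mn = (\<Sum>\<^sub>\<infinity>k. c k * fmult (fpow P (fst k)) (fpow Q (snd k)) mn)"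
proof -
  obtain m n where mn: "mn = (m,n)" by force
  define N where "N = m + n"
  define B where "B = Sigma {..N} (\<lambda>i. {..N-i})"
  have fin: "finite B" by (simp add: B_def)
  have z: "c k * fmult (fpow P (fst k)) (fpow Q (snd k)) mn = 0" if "k \<notin> B" for k
  proof -
    obtain i j where k: "k = (i,j)" by force
    have "m + n < i + j" using that by (auto simp: B_def k N_def)
    then have "fmult (fpow P i) (fpow Q j) (m,n) = 0"
      by (intro ord_fmult[where a=i and b=j]) (auto intro: ord_fpow[where A=P, OF P0] ord_fpow[where A=Q, OF Q0])
    then show ?thesis by (simp add: k mn)
  qed
  have "(\<Sum>\<^sub>\<infinity>k. c k * fmult (fpow P (fst k)) (fpow Q (snd k)) mn) =
        (\<Sum>k\<in>B. c k * fmult (fpow P (fst k)) (fpow Q (snd k)) mn)"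
    by (subst infsum_cong_neutral[where T=B and g="\<lambda>k. c k * fmult (fpow P (fst k)) (fpow Q (snd k)) mn"])
       (use z fin in auto)
  also have "\<dots> = (\<Sum>i\<le>N. \<Sum>j\<le>N-i. c (i,j) * fmult (fpow P i) (fpow Q j) mn)"
    unfolding B_def by (subst sum.Sigma) (auto simp: case_prod_unfold)
  also have "\<dots> = fcomp c P Q mn"
    by (simp add: fcomp_def mn N_def)
  finally show ?thesis by simp
qed

lemma COMP:
  assumes r: "r > 0" and C: "absc c r" and s0: "s0 > 0" and P: "absc P s0" and Q: "absc Q s0"
    and P0: "P (0,0) = 0" and Q0: "Q (0,0) = 0"
  shows "\<exists>s>0. s \<le> s0 \<and> absc (fcomp c P Q) s \<and>
     (\<forall>z. inpd s z \<longrightarrow> inpd r (ev P z, ev Q z) \<and> ev (fcomp c P Q) z = ev c (ev P z, ev Q z))"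
proof -
  obtain s1 where s1: "s1 > 0" "s1 \<le> s0" "\<forall>t. 0 \<le> t \<and> t \<le> s1 \<longrightarrow> Mj P t \<le> r"
    using SMALL_choose2[OF P s0 P0 r] by blast
  obtain s2 where s2: "s2 > 0" "s2 \<le> s0" "\<forall>t. 0 \<le> t \<and> t \<le> s2 \<longrightarrow> Mj Q t \<le> r"
    using SMALL_choose2[OF Q s0 Q0 r] by blast
  define s where "s = min s1 s2"
  have s: "s > 0" "s \<le> s0" using s1 s2 by (auto simp: s_def)
  have mP: "Mj P s \<le> r" and mQ: "Mj Q s \<le> r" using s1 s2 s by (auto simp: s_def)
  have Ps: "absc P s" and Qs: "absc Q s" using absc_mono P Q s by auto
  define R where "R = (\<lambda>k mn. c k * fmult (fpow P (fst k)) (fpow Q (snd k)) mn)"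
  have powP: "absc (fpow P i) s \<and> Mj (fpow P i) s \<le> Mj P s ^ i \<and> (\<forall>z. inpd s z \<longrightarrow> ev (fpow P i) z = ev P z ^ i)" for i
    by (rule POW[OF s(1) Ps])
  have powQ: "absc (fpow Q i) s \<and> Mj (fpow Q i) s \<le> Mj Q s ^ i \<and> (\<forall>z. inpd s z \<longrightarrow> ev (fpow Q i) z = ev Q z ^ i)" for i
    by (rule POW[OF s(1) Qs])
  have Ra: "absc (R k) s" for k
    unfolding R_def by (rule SCALE(1)) (use PROD(1)[OF s(1)] powP powQ in blast)
  have RMj: "Mj (R k) s \<le> amaj c r k" for k
  proof -
    obtain i j where k: "k = (i,j)" by force
    have "Mj (R k) s = norm (c k) * Mj (fmult (fpow P i) (fpow Q j)) s"
      unfolding R_def k fst_conv snd_conv by (rule SCALE(2)) (use PROD(1)[OF s(1)] powP powQ in blast)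
    also have "\<dots> \<le> norm (c k) * (Mj P s ^ i * Mj Q s ^ j)"
    proof (intro mult_left_mono)
      have "Mj (fmult (fpow P i) (fpow Q j)) s \<le> Mj (fpow P i) s * Mj (fpow Q j) s"
        using PROD(2)[OF s(1)] powP powQ by blast
      also have "\<dots> \<le> Mj P s ^ i * Mj Q s ^ j"
        using powP[of i] powQ[of j] Mj_nonneg[of s] s by (intro mult_mono) auto
      finally show "Mj (fmult (fpow P i) (fpow Q j)) s \<le> Mj P s ^ i * Mj Q s ^ j" .
    qed auto
    also have "\<dots> \<le> norm (c k) * (r ^ i * r ^ j)"
      using mP mQ Mj_nonneg[of s] s r by (intro mult_left_mono mult_mono power_mono) auto
    finally show ?thesis by (simp add: amaj_def k power_add)
  qed
  have Rs: "(\<lambda>k. Mj (R k) s) summable_on UNIV"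
    by (rule summable_on_comparison_test[where f="amaj c r"]) 
       (use C RMj Mj_nonneg s in \<open>auto simp: absc_def\<close>)
  have Seq: "(\<lambda>mn. \<Sum>\<^sub>\<infinity>k. R k mn) = fcomp c P Q"
    by (rule ext) (simp add: fcomp_as_infsum[where P=P and Q=Q, OF P0 Q0] R_def)
  note SS = SUM[OF s(1) Ra Rs, unfolded Seq]
  have "inpd r (ev P z, ev Q z) \<and> ev (fcomp c P Q) z = ev c (ev P z, ev Q z)" if z: "inpd s z" for z
  proof
    show ir: "inpd r (ev P z, ev Q z)"
      using norm_ev_le[OF Ps z] norm_ev_le[OF Qs z] mP mQ by (auto simp: inpd_def)
    have "ev (R k) z = mon c (ev P z, ev Q z) k" for k
    proof -
      obtain i j where k: "k = (i,j)" by force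
      have a: "absc (fmult (fpow P i) (fpow Q j)) s" using PROD(1)[OF s(1)] powP powQ by blast
      have "ev (fmult (fpow P i) (fpow Q j)) z = ev P z ^ i * ev Q z ^ j"
      proof -
        have "ev (fpow P i) z = ev P z ^ i" "ev (fpow Q j) z = ev Q z ^ j"
          using powP[of i] powQ[of j] z by blast+
        then show ?thesis using PROD(3)[OF s(1) _ _ z] powP powQ by auto
      qed
      then show ?thesis unfolding R_def k fst_conv snd_conv SCALE(3)[OF a]
        by (simp add: mon_def mult.assoc)
    qed
    then have "((\<lambda>k. ev (R k) z) has_sum ev c (ev P z, ev Q z)) UNIV"
      using ev_has_sum[OF C ir] by simp
    then show "ev (fcomp c P Q) z = ev c (ev P z, ev Q z)" using SS(4)[OF z] has_sum_unique by blast
  qed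
  then show ?thesis using s SS(2) by blast
qed

lemma pow_bound_aux:
  fixes r m :: real
  assumes r: "r > 0" and m: "0 \<le> m" "m \<le> r / 2"
  shows "of_nat i * m ^ (i - 1) \<le> 2 / r * r ^ i"
proof (cases i)
  case 0 then show ?thesis using r by simp
next
  case (Suc k)
  have "m ^ k \<le> (r/2) ^ k" by (rule power_mono) (use m in auto)
  then have "of_nat i * m ^ (i - 1) \<le> of_nat i * (r/2) ^ k"
    using Suc by (intro mult_left_mono) auto
  also have "\<dots> = of_nat i / 2 ^ k * r ^ k" by (simp add: power_divide)
  also have "\<dots> \<le> 2 * r ^ k"
  proof -
    have "real i < 2 ^ i" using less_exp[of i] by (metis of_nat_less_iff of_nat_numeral of_nat_power)
    then have "real i / 2 ^ k \<le> (2::real)" using Suc by (simp add: field_simps)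
    then show ?thesis using r by (intro mult_right_mono) auto
  qed
  also have "\<dots> = 2 / r * r ^ i" using r Suc by simp
  finally show ?thesis .
qed

lemma DSUM:
  assumes s: "s > 0" and A: "absc A s" and B: "absc B s" and mA: "Mj A s \<le> m" and mB: "Mj B s \<le> m"
  shows "absc (\<lambda>mn. \<Sum>k<i. fmult (fpow A (i - Suc k)) (fpow B k) mn) s \<and>
         Mj (\<lambda>mn. \<Sum>k<i. fmult (fpow A (i - Suc k)) (fpow B k) mn) s \<le> of_nat i * m ^ (i - 1) \<and>
         (\<forall>z. inpd s z \<longrightarrow> ev (\<lambda>mn. \<Sum>k<i. fmult (fpow A (i - Suc k)) (fpow B k) mn) z =
             (\<Sum>k<i. ev A z ^ (i - Suc k) * ev B z ^ k))"
proof -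
  have pa: "absc (fpow A k) s \<and> Mj (fpow A k) s \<le> Mj A s ^ k \<and> (\<forall>z. inpd s z \<longrightarrow> ev (fpow A k) z = ev A z ^ k)" for k
    by (rule POW[OF s A])
  have pb: "absc (fpow B k) s \<and> Mj (fpow B k) s \<le> Mj B s ^ k \<and> (\<forall>z. inpd s z \<longrightarrow> ev (fpow B k) z = ev B z ^ k)" for k
    by (rule POW[OF s B])
  have ab: "absc (fmult (fpow A (i - Suc k)) (fpow B k)) s" for k
    using PROD(1)[OF s] pa pb by blast
  have mj: "Mj (fmult (fpow A (i - Suc k)) (fpow B k)) s \<le> m ^ (i - 1)" if "k < i" for k
  proof -
    have m0: "m \<ge> 0" using mA Mj_nonneg[of s A] s by linarith
    have pwA: "Mj A s ^ n \<le> m ^ n" for n by (rule power_mono[OF mA]) (use Mj_nonneg s in auto)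
    have pwB: "Mj B s ^ n \<le> m ^ n" for n by (rule power_mono[OF mB]) (use Mj_nonneg s in auto)
    have "Mj (fmult (fpow A (i - Suc k)) (fpow B k)) s \<le> Mj (fpow A (i - Suc k)) s * Mj (fpow B k) s"
      using PROD(2)[OF s] pa pb by blast
    also have "\<dots> \<le> m ^ (i - Suc k) * m ^ k"
    proof (intro mult_mono)
      show "Mj (fpow A (i - Suc k)) s \<le> m ^ (i - Suc k)"
        using pa[of "i - Suc k"] pwA[of "i - Suc k"] by linarith
      show "Mj (fpow B k) s \<le> m ^ k"
        using pb[of k] pwB[of k] by linarith
    qed (use m0 Mj_nonneg s in auto)
    also have "\<dots> = m ^ (i - 1)" using that by (simp flip: power_add)
    finally show ?thesis .
  qed
  note SF = SUMF[of s "{..<i}" "\<lambda>k. fmult (fpow A (i - Suc k)) (fpow B k)"]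
  have "(\<Sum>k<i. Mj (fmult (fpow A (i - Suc k)) (fpow B k)) s) \<le> (\<Sum>k<i. m ^ (i - 1))"
    by (rule sum_mono) (use mj in auto)
  then show ?thesis using SF ab s
    by (auto intro: order_trans) (use pa pb ab PROD(3)[OF s] in \<open>auto intro!: sum.cong\<close>)
qed

lemma DIFF2:
  assumes r: "r > 0" and C: "absc c r" and s0: "s0 > 0"
    and X: "absc X s0" and U: "absc U s0" and Y: "absc Y s0" and V: "absc V s0"
    and X0: "X (0,0) = 0" and U0: "U (0,0) = 0" and Y0: "Y (0,0) = 0" and V0: "V (0,0) = 0"
  shows "\<exists>s>0. s \<le> s0 \<and> (\<exists>K1 K2. absc K1 s \<and> absc K2 s \<and>
     (\<forall>z. inpd s z \<longrightarrow> inpd r (ev X z + ev U z, ev Y z + ev V z) \<and> inpd r (ev X z, ev Y z) \<and>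
        ev c (ev X z + ev U z, ev Y z + ev V z) - ev c (ev X z, ev Y z) =
        ev U z * ev K1 z + ev V z * ev K2 z))"
proof -
  define e where "e = r / 4"
  have e: "e > 0" using r by (simp add: e_def)
  obtain s1 where s1: "s1 > 0" "s1 \<le> s0" "\<forall>t. 0 \<le> t \<and> t \<le> s1 \<longrightarrow> Mj X t \<le> e"
    using SMALL_choose2[OF X s0 X0 e] by blast
  obtain s2 where s2: "s2 > 0" "s2 \<le> s0" "\<forall>t. 0 \<le> t \<and> t \<le> s2 \<longrightarrow> Mj U t \<le> e"
    using SMALL_choose2[OF U s0 U0 e] by blast
  obtain s3 where s3: "s3 > 0" "s3 \<le> s0" "\<forall>t. 0 \<le> t \<and> t \<le> s3 \<longrightarrow> Mj Y t \<le> e"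
    using SMALL_choose2[OF Y s0 Y0 e] by blast
  obtain s4 where s4: "s4 > 0" "s4 \<le> s0" "\<forall>t. 0 \<le> t \<and> t \<le> s4 \<longrightarrow> Mj V t \<le> e"
    using SMALL_choose2[OF V s0 V0 e] by blast
  define s where "s = min (min s1 s2) (min s3 s4)"
  have s: "s > 0" "s \<le> s0" using s1 s2 s3 s4 by (auto simp: s_def)
  have mX: "Mj X s \<le> e" and mU: "Mj U s \<le> e" and mY: "Mj Y s \<le> e" and mV: "Mj V s \<le> e"
    using s1 s2 s3 s4 s by (auto simp: s_def)
  have Xs: "absc X s" and Us: "absc U s" and Ys: "absc Y s" and Vs: "absc V s"
    using absc_mono X U Y V s by auto
  define XU where "XU = (\<lambda>mn. X mn + U mn)"
  define YV where "YV = (\<lambda>mn. Y mn + V mn)"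
  have XUs: "absc XU s" and YVs: "absc YV s" unfolding XU_def YV_def using ADD(1) s Xs Us Ys Vs by auto
  have mXU: "Mj XU s \<le> r/2" unfolding XU_def using ADD(2)[OF _ Xs Us] s mX mU by (simp add: e_def)
  have mYV: "Mj YV s \<le> r/2" unfolding YV_def using ADD(2)[OF _ Ys Vs] s mY mV by (simp add: e_def)
  have evXU: "ev XU z = ev X z + ev U z" if "inpd s z" for z unfolding XU_def using ADD(3)[OF _ Xs Us that] s by simp
  have evYV: "ev YV z = ev Y z + ev V z" if "inpd s z" for z unfolding YV_def using ADD(3)[OF _ Ys Vs that] s by simp
  have mX2: "Mj X s \<le> r/2" and mY2: "Mj Y s \<le> r/2" using mX mY r by (auto simp: e_def)
  define m where "m = r / 2"
  have m0: "0 \<le> m" "m \<le> r/2" using r by (auto simp: m_def)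
  define D1 where "D1 = (\<lambda>i mn. \<Sum>k<i. fmult (fpow X (i - Suc k)) (fpow XU k) mn)"
  define D2 where "D2 = (\<lambda>j mn. \<Sum>k<j. fmult (fpow Y (j - Suc k)) (fpow YV k) mn)"
  have d1: "absc (D1 i) s \<and> Mj (D1 i) s \<le> of_nat i * m ^ (i - 1) \<and>
      (\<forall>z. inpd s z \<longrightarrow> ev (D1 i) z = (\<Sum>k<i. ev X z ^ (i - Suc k) * ev XU z ^ k))" for i
    unfolding D1_def by (rule DSUM[OF s(1) Xs XUs]) (use mX2 mXU in \<open>auto simp: m_def\<close>)
  have d2: "absc (D2 i) s \<and> Mj (D2 i) s \<le> of_nat i * m ^ (i - 1) \<and>
      (\<forall>z. inpd s z \<longrightarrow> ev (D2 i) z = (\<Sum>k<i. ev Y z ^ (i - Suc k) * ev YV z ^ k))" for i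
    unfolding D2_def by (rule DSUM[OF s(1) Ys YVs]) (use mY2 mYV in \<open>auto simp: m_def\<close>)
  have pXU: "absc (fpow YV k) s \<and> Mj (fpow YV k) s \<le> Mj YV s ^ k \<and> (\<forall>z. inpd s z \<longrightarrow> ev (fpow YV k) z = ev YV z ^ k)" for k
    by (rule POW[OF s(1) YVs])
  have pX: "absc (fpow X k) s \<and> Mj (fpow X k) s \<le> Mj X s ^ k \<and> (\<forall>z. inpd s z \<longrightarrow> ev (fpow X k) z = ev X z ^ k)" for k
    by (rule POW[OF s(1) Xs])
  have pw1: "Mj YV s ^ k \<le> m ^ k" for k by (rule power_mono) (use mYV Mj_nonneg s in \<open>auto simp: m_def\<close>)
  have pw2: "Mj X s ^ k \<le> m ^ k" for k by (rule power_mono) (use mX2 Mj_nonneg s in \<open>auto simp: m_def\<close>)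
  define R1 where "R1 = (\<lambda>k mn. c k * fmult (D1 (fst k)) (fpow YV (snd k)) mn)"
  define R2 where "R2 = (\<lambda>k mn. c k * fmult (fpow X (fst k)) (D2 (snd k)) mn)"
  have a1: "absc (fmult (D1 i) (fpow YV j)) s" for i j using PROD(1)[OF s(1)] d1 pXU by blast
  have a2: "absc (fmult (fpow X i) (D2 j)) s" for i j using PROD(1)[OF s(1)] d2 pX by blast
  have R1a: "absc (R1 k) s" for k unfolding R1_def by (rule SCALE(1)[OF a1])
  have R2a: "absc (R2 k) s" for k unfolding R2_def by (rule SCALE(1)[OF a2])
  have b1: "of_nat i * m ^ (i - 1) * m ^ j \<le> 2 / r * (r ^ i * r ^ j)" for i j
  proof -
    have A: "of_nat i * m ^ (i - 1) \<le> 2 / r * r ^ i" by (rule pow_bound_aux[OF r m0])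
    have B: "m ^ j \<le> r ^ j" by (rule power_mono) (use m0 r in \<open>auto simp: m_def\<close>)
    have "of_nat i * m ^ (i - 1) * m ^ j \<le> 2 / r * r ^ i * r ^ j"
      by (rule mult_mono[OF A B]) (use r m0 in auto)
    then show ?thesis by (simp add: mult.assoc)
  qed
  have R1M: "Mj (R1 k) s \<le> 2 / r * amaj c r k" for k
  proof -
    obtain i j where k: "k = (i,j)" by force
    have "Mj (R1 k) s = norm (c k) * Mj (fmult (D1 i) (fpow YV j)) s"
      unfolding R1_def k fst_conv snd_conv by (rule SCALE(2)[OF a1])
    also have "\<dots> \<le> norm (c k) * (of_nat i * m ^ (i - 1) * m ^ j)"
    proof (intro mult_left_mono)
      have "Mj (fmult (D1 i) (fpow YV j)) s \<le> Mj (D1 i) s * Mj (fpow YV j) s"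
        using PROD(2)[OF s(1)] d1 pXU by blast
      also have "\<dots> \<le> (of_nat i * m ^ (i - 1)) * m ^ j"
        using d1[of i] pXU[of j] pw1[of j] Mj_nonneg[of s] s m0
        by (intro mult_mono) auto
      finally show "Mj (fmult (D1 i) (fpow YV j)) s \<le> of_nat i * m ^ (i - 1) * m ^ j" .
    qed auto
    also have "\<dots> \<le> norm (c k) * (2 / r * (r ^ i * r ^ j))" by (intro mult_left_mono b1) auto
    finally show ?thesis by (simp add: amaj_def k power_add mult_ac)
  qed
  have R2M: "Mj (R2 k) s \<le> 2 / r * amaj c r k" for k
  proof -
    obtain i j where k: "k = (i,j)" by force
    have "Mj (R2 k) s = norm (c k) * Mj (fmult (fpow X i) (D2 j)) s"
      unfolding R2_def k fst_conv snd_conv by (rule SCALE(2)[OF a2])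
    also have "\<dots> \<le> norm (c k) * (of_nat j * m ^ (j - 1) * m ^ i)"
    proof (intro mult_left_mono)
      have "Mj (fmult (fpow X i) (D2 j)) s \<le> Mj (fpow X i) s * Mj (D2 j) s"
        using PROD(2)[OF s(1)] d2 pX by blast
      also have "\<dots> \<le> m ^ i * (of_nat j * m ^ (j - 1))"
        using d2[of j] pX[of i] pw2[of i] Mj_nonneg[of s] s m0
        by (intro mult_mono) auto
      finally show "Mj (fmult (fpow X i) (D2 j)) s \<le> of_nat j * m ^ (j - 1) * m ^ i" by (simp add: mult_ac)
    qed auto
    also have "\<dots> \<le> norm (c k) * (2 / r * (r ^ j * r ^ i))" by (intro mult_left_mono b1) auto
    finally show ?thesis by (simp add: amaj_def k power_add mult_ac)
  qed
  have cs: "(\<lambda>k. 2 / r * amaj c r k) summable_on UNIV"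
    by (rule summable_on_cmult_right) (use C in \<open>simp add: absc_def\<close>)
  have R1s: "(\<lambda>k. Mj (R1 k) s) summable_on UNIV"
    by (rule summable_on_comparison_test[OF cs]) (use R1M Mj_nonneg s in auto)
  have R2s: "(\<lambda>k. Mj (R2 k) s) summable_on UNIV"
    by (rule summable_on_comparison_test[OF cs]) (use R2M Mj_nonneg s in auto)
  note S1 = SUM[OF s(1) R1a R1s]
  note S2 = SUM[OF s(1) R2a R2s]
  define K1 where "K1 = (\<lambda>mn. \<Sum>\<^sub>\<infinity>k. R1 k mn)"
  define K2 where "K2 = (\<lambda>mn. \<Sum>\<^sub>\<infinity>k. R2 k mn)"
  have main: "inpd r (ev X z + ev U z, ev Y z + ev V z) \<and> inpd r (ev X z, ev Y z) \<and>
        ev c (ev X z + ev U z, ev Y z + ev V z) - ev c (ev X z, ev Y z) =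
        ev U z * ev K1 z + ev V z * ev K2 z" if z: "inpd s z" for z
  proof -
    define x where "x = ev X z"
    define u where "u = ev U z"
    define y where "y = ev Y z"
    define v where "v = ev V z"
    have in1: "inpd r (x + u, y + v)"
      using norm_ev_le[OF XUs z] norm_ev_le[OF YVs z] mXU mYV evXU[OF z] evYV[OF z] r
      by (auto simp: inpd_def x_def u_def y_def v_def)
    have in2: "inpd r (x, y)"
      using norm_ev_le[OF Xs z] norm_ev_le[OF Ys z] mX2 mY2 r
      by (auto simp: inpd_def x_def y_def)
    have e1: "ev (R1 k) z = c k * (\<Sum>l<fst k. x ^ (fst k - Suc l) * (x + u) ^ l) * (y + v) ^ snd k" for k
    proof -
      obtain i j where k: "k = (i,j)" by force
      have "ev (fmult (D1 i) (fpow YV j)) z = ev (D1 i) z * ev (fpow YV j) z"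
        using PROD(3)[OF s(1) _ _ z] d1 pXU by blast
      also have "\<dots> = (\<Sum>l<i. x ^ (i - Suc l) * (x + u) ^ l) * (y + v) ^ j"
      proof -
        have "ev (D1 i) z = (\<Sum>k<i. ev X z ^ (i - Suc k) * ev XU z ^ k)" using d1[of i] z by blast
        moreover have "ev (fpow YV j) z = ev YV z ^ j" using pXU[of j] z by blast
        ultimately show ?thesis using evXU[OF z] evYV[OF z] by (simp add: x_def u_def y_def v_def)
      qed
      finally show ?thesis unfolding R1_def k fst_conv snd_conv SCALE(3)[OF a1] by (simp add: mult.assoc)
    qed
    have e2: "ev (R2 k) z = c k * x ^ fst k * (\<Sum>l<snd k. y ^ (snd k - Suc l) * (y + v) ^ l)" for k
    proof -
      obtain i j where k: "k = (i,j)" by force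
      have "ev (fmult (fpow X i) (D2 j)) z = ev (fpow X i) z * ev (D2 j) z"
        using PROD(3)[OF s(1) _ _ z] d2 pX by blast
      also have "\<dots> = x ^ i * (\<Sum>l<j. y ^ (j - Suc l) * (y + v) ^ l)"
      proof -
        have "ev (D2 j) z = (\<Sum>k<j. ev Y z ^ (j - Suc k) * ev YV z ^ k)" using d2[of j] z by blast
        moreover have "ev (fpow X i) z = ev X z ^ i" using pX[of i] z by blast
        ultimately show ?thesis using evYV[OF z] by (simp add: x_def u_def y_def v_def)
      qed
      finally show ?thesis unfolding R2_def k fst_conv snd_conv SCALE(3)[OF a2] by (simp add: mult.assoc)
    qed
    have h1: "((\<lambda>k. u * ev (R1 k) z + v * ev (R2 k) z) has_sum (u * ev K1 z + v * ev K2 z)) UNIV"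
      unfolding K1_def K2_def
      by (intro has_sum_add has_sum_cmult_right S1(4)[OF z] S2(4)[OF z])
    have h2: "((\<lambda>k. mon c (x + u, y + v) k - mon c (x, y) k) has_sum
        (ev c (x + u, y + v) - ev c (x, y))) UNIV"
      by (intro has_sum_diff' ev_has_sum[OF C in1] ev_has_sum[OF C in2])
    have eq: "u * ev (R1 k) z + v * ev (R2 k) z = mon c (x + u, y + v) k - mon c (x, y) k" for k
    proof -
      obtain i j where k: "k = (i,j)" by force
      have p1: "(x + u) ^ i - x ^ i = u * (\<Sum>l<i. x ^ (i - Suc l) * (x + u) ^ l)"
        using power_diff_sumr2[of "x + u" i x] by simp
      have p2: "(y + v) ^ j - y ^ j = v * (\<Sum>l<j. y ^ (j - Suc l) * (y + v) ^ l)"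
        using power_diff_sumr2[of "y + v" j y] by simp
      have "mon c (x + u, y + v) k - mon c (x, y) k =
          c k * (((x + u) ^ i - x ^ i) * (y + v) ^ j + x ^ i * ((y + v) ^ j - y ^ j))"
        by (simp add: mon_def k algebra_simps)
      also have "\<dots> = u * ev (R1 k) z + v * ev (R2 k) z"
        unfolding p1 p2 e1 e2 k by (simp add: algebra_simps)
      finally show ?thesis by simp
    qed
    show ?thesis using h1 h2 has_sum_unique eq in1 in2
      by (simp add: x_def u_def y_def v_def)
  qed
  show ?thesis
    using s S1(2) S2(2) main unfolding K1_def[symmetric] K2_def[symmetric] by blast
qed

lemma has_sum_shift_iff:
  fixes f :: "nat \<times> nat \<Rightarrow> 'a::{comm_monoid_add, topological_space}"
  shows "(shiftc i j f has_sum x) UNIV \<longleftrightarrow> (f has_sum x) UNIV"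
proof -
  define h where "h = (\<lambda>(m::nat,n::nat). (m+i, n+j))"
  have inj: "inj_on h UNIV" by (auto simp: h_def inj_on_def)
  have e: "shiftc i j f \<circ> h = f" by (auto simp: shiftc_def h_def o_def)
  have hU: "h ` UNIV = {(m,n). i \<le> m \<and> j \<le> n}"
    by (auto simp: h_def image_def) (metis le_add_diff_inverse2)+
  have "(shiftc i j f has_sum x) UNIV \<longleftrightarrow> (shiftc i j f has_sum x) (h ` UNIV)"
    by (rule has_sum_cong_neutral) (auto simp: shiftc_def hU split: if_splits)
  also have "\<dots> \<longleftrightarrow> (f has_sum x) UNIV" using has_sum_reindex[OF inj, of "shiftc i j f" x] e by simp
  finally show ?thesis .
qed

lemma summable_shift_iff:
  fixes f :: "nat \<times> nat \<Rightarrow> 'a::{comm_monoid_add, topological_space}"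
  shows "shiftc i j f summable_on UNIV \<longleftrightarrow> f summable_on UNIV"
  by (simp add: summable_on_def has_sum_shift_iff)

lemma amaj_shift: "amaj (shiftc i j A) s = (\<lambda>mn. s ^ (i+j) * shiftc i j (amaj A s) mn)"
proof
  fix mn :: "nat \<times> nat"
  obtain m n where mn: "mn = (m,n)" by force
  show "amaj (shiftc i j A) s mn = s ^ (i+j) * shiftc i j (amaj A s) mn"
  proof (cases "i \<le> m \<and> j \<le> n")
    case True
    then have "s ^ (m+n) = s^(i+j) * s^((m-i)+(n-j))" by (simp flip: power_add)
    then show ?thesis using True by (simp add: amaj_def shiftc_def mn mult_ac add.commute[of j i])
  qed (auto simp: amaj_def shiftc_def mn)
qed

lemma mon_shift: "mon (shiftc i j A) z = (\<lambda>mn. fst z ^ i * snd z ^ j * shiftc i j (mon A z) mn)"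
proof
  fix mn :: "nat \<times> nat"
  obtain m n where mn: "mn = (m,n)" by force
  show "mon (shiftc i j A) z mn = fst z ^ i * snd z ^ j * shiftc i j (mon A z) mn"
  proof (cases "i \<le> m \<and> j \<le> n")
    case True
    then have "fst z ^ m = fst z ^ i * fst z ^ (m-i)" "snd z ^ n = snd z ^ j * snd z ^ (n-j)"
      by (simp_all flip: power_add)
    then show ?thesis using True by (simp add: mon_def shiftc_def mn mult_ac)
  qed (auto simp: mon_def shiftc_def mn)
qed

lemma EV_SHIFT:
  assumes A: "absc A s"
  shows "absc (shiftc i j A) s" "inpd s z \<Longrightarrow> ev (shiftc i j A) z = fst z ^ i * snd z ^ j * ev A z"
proof -
  have "(amaj (shiftc i j A) s has_sum (s^(i+j) * Mj A s)) UNIV"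
    unfolding amaj_shift by (rule has_sum_cmult_right) (simp add: has_sum_shift_iff Mj_has_sum[OF A])
  then show "absc (shiftc i j A) s" by (auto simp: absc_def has_sum_imp_summable)
  assume z: "inpd s z"
  have "(mon (shiftc i j A) z has_sum (fst z ^ i * snd z ^ j * ev A z)) UNIV"
    unfolding mon_shift by (rule has_sum_cmult_right) (simp add: has_sum_shift_iff ev_has_sum[OF A z])
  then show "ev (shiftc i j A) z = fst z ^ i * snd z ^ j * ev A z" by (simp add: ev_def infsumI)
qed

definition rowsh :: "fps2 \<Rightarrow> fps2" where "rowsh A = (\<lambda>(i,j). A (Suc i, j))"
definition row0 :: "fps2 \<Rightarrow> fps2" where "row0 A = (\<lambda>(i,j). if i = 0 then A (i,j) else 0)"

lemma row_decomp: "A = (\<lambda>mn. row0 A mn + shiftc 1 0 (rowsh A) mn)"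
proof
  fix mn :: "nat \<times> nat"
  obtain m n where mn: "mn = (m,n)" by force
  show "A mn = row0 A mn + shiftc 1 0 (rowsh A) mn"
    by (cases m) (simp_all add: row0_def shiftc_def rowsh_def mn)
qed

lemma absc_rowsh:
  assumes A: "absc A s" and s: "s > 0" shows "absc (rowsh A) s"
proof -
  define h where "h = (\<lambda>(i::nat, j::nat). (Suc i, j))"
  have inj: "inj_on h UNIV" by (auto simp: h_def inj_on_def)
  have "amaj A s summable_on (h ` UNIV)"
    using A by (auto simp: absc_def intro: summable_on_subset_banach)
  then have "(amaj A s \<circ> h) summable_on UNIV" using summable_on_reindex[OF inj] by blast
  then have "(\<lambda>x. inverse s * (amaj A s \<circ> h) x) summable_on UNIV" by (rule summable_on_cmult_right)
  moreover have "(\<lambda>x. inverse s * (amaj A s \<circ> h) x) = amaj (rowsh A) s"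
  proof
    fix x :: "nat \<times> nat"
    obtain i j where x: "x = (i,j)" by force
    show "inverse s * (amaj A s \<circ> h) x = amaj (rowsh A) s x"
      using s by (simp add: x h_def amaj_def rowsh_def field_simps)
  qed
  ultimately show ?thesis by (simp add: absc_def)
qed

lemma absc_row0:
  assumes A: "absc A s" and s: "s \<ge> 0" shows "absc (row0 A) s"
  unfolding absc_def
  by (rule summable_on_comparison_test[where f="amaj A s"])
     (use A s in \<open>auto simp: absc_def amaj_def row0_def split: prod.splits\<close>)

lemma ev_row0: "ev (row0 A) z = ev A (0, snd z)"
proof -
  have "mon (row0 A) z = mon A (0, snd z)" by (auto simp: mon_def row0_def)
  then show ?thesis by (simp add: ev_def)
qed

lemma ev_decomp:
  assumes A: "absc A s" and s: "s > 0" and z: "inpd s z"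
  shows "ev A z = ev A (0, snd z) + fst z * ev (rowsh A) z"
proof -
  have "ev A z = ev (\<lambda>mn. row0 A mn + shiftc 1 0 (rowsh A) mn) z" using row_decomp[of A] by simp
  also have "\<dots> = ev (row0 A) z + ev (shiftc 1 0 (rowsh A)) z"
    using ADD(3)[OF _ absc_row0[OF A] EV_SHIFT(1)[OF absc_rowsh[OF A s]] z] s by simp
  also have "\<dots> = ev A (0, snd z) + fst z * ev (rowsh A) z"
    using EV_SHIFT(2)[OF absc_rowsh[OF A s] z] ev_row0 by simp
  finally show ?thesis .
qed

lemma ROW0:
  assumes A: "absc A s" and s: "s > 0" and Z: "\<And>z. inpd s z \<Longrightarrow> fst z \<noteq> 0 \<Longrightarrow> ev A z = 0"
    and w: "norm w \<le> s"
  shows "ev A (0, w) = 0"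
proof (rule ccontr)
  assume ne: "ev A (0, w) \<noteq> 0"
  define M where "M = Mj (rowsh A) s"
  have M0: "M \<ge> 0" using Mj_nonneg s by (simp add: M_def)
  define t where "t = min s (norm (ev A (0, w)) / (2 * (M + 1)))"
  have t: "t > 0" "t \<le> s" using s ne M0 by (auto simp: t_def)
  define z where "z = (complex_of_real t, w)"
  have z: "inpd s z" using t w by (auto simp: z_def inpd_def)
  have "ev A z = ev A (0, snd z) + fst z * ev (rowsh A) z" by (rule ev_decomp[OF A s z])
  moreover have "ev A z = 0" using Z[OF z] t by (simp add: z_def)
  ultimately have "ev A (0, w) = - (of_real t * ev (rowsh A) z)" by (simp add: z_def add_eq_0_iff)
  then have "norm (ev A (0, w)) = t * norm (ev (rowsh A) z)"
    using t by (simp add: norm_mult)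
  also have "\<dots> \<le> t * M"
    using norm_ev_le[OF absc_rowsh[OF A s] z] t by (simp add: M_def mult_left_mono)
  also have "\<dots> \<le> norm (ev A (0, w)) / (2 * (M + 1)) * M"
    using M0 by (intro mult_right_mono) (auto simp: t_def)
  also have "\<dots> < norm (ev A (0, w))"
  proof -
    have np: "norm (ev A (0, w)) > 0" using ne by simp
    have "M / (2 * (M + 1)) < 1" using M0 by (simp add: field_simps)
    then have "norm (ev A (0, w)) * (M / (2 * (M + 1))) < norm (ev A (0, w)) * 1"
      using np by (intro mult_strict_left_mono) auto
    then show ?thesis by (simp add: field_simps)
  qed
  finally show False by simp
qed

lemma PEEL:
  assumes A: "absc A s" and s: "s > 0" and Z: "\<And>z. inpd s z \<Longrightarrow> ev A z = 0"
  shows "\<And>z. inpd s z \<Longrightarrow> ev (row0 A) z = 0" "\<And>z. inpd s z \<Longrightarrow> ev (rowsh A) z = 0"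
proof -
  fix z assume z: "inpd s z"
  have r0: "ev A (0, w) = 0" if "norm w \<le> s" for w using Z[of "(0,w)"] that s by (auto simp: inpd_def)
  show "ev (row0 A) z = 0" using r0 z by (simp add: ev_row0 inpd_def)
next
  have r0: "ev A (0, w) = 0" if "norm w \<le> s" for w using Z[of "(0,w)"] that s by (auto simp: inpd_def)
  have nz: "ev (rowsh A) z = 0" if z: "inpd s z" "fst z \<noteq> 0" for z
    using ev_decomp[OF A s z(1)] Z[OF z(1)] r0[of "snd z"] z by (auto simp: inpd_def)
  fix z assume z: "inpd s z"
  show "ev (rowsh A) z = 0"
  proof (cases "fst z = 0")
    case True
    then have "z = (0, snd z)" by (cases z) auto
    moreover have "ev (rowsh A) (0, snd z) = 0"
      by (rule ROW0[OF absc_rowsh[OF A s] s nz]) (use z in \<open>auto simp: inpd_def\<close>)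
    ultimately show ?thesis by simp
  qed (use nz z in auto)
qed

lemma fswap_props:
  assumes A: "absc A s"
  shows "absc (fswap A) s" "ev (fswap A) z = ev A (snd z, fst z)" "Mj (fswap A) s = Mj A s"
proof -
  define h where "h = (\<lambda>(m::nat,n::nat). (n,m))"
  have b: "bij_betw h UNIV UNIV" by (rule bij_betwI[where g=h]) (auto simp: h_def)
  have "amaj (fswap A) s = (\<lambda>x. amaj A s (h x))" by (auto simp: amaj_def fswap_def h_def add.commute)
  then have "(amaj (fswap A) s has_sum Mj A s) UNIV"
    using has_sum_reindex_bij_betw[OF b, of "amaj A s"] Mj_has_sum[OF A] by simp
  then show "absc (fswap A) s" "Mj (fswap A) s = Mj A s"
    by (auto simp: absc_def has_sum_imp_summable Mj_def infsumI)
  have "mon (fswap A) z = (\<lambda>x. mon A (snd z, fst z) (h x))" by (auto simp: mon_def fswap_def h_def mult_ac)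
  then show "ev (fswap A) z = ev A (snd z, fst z)"
    unfolding ev_def using infsum_reindex_bij_betw[OF b, of "mon A (snd z, fst z)"] by simp
qed

lemma rowsh_pow: "(rowsh ^^ n) C (i,j) = C (i+n, j)"
  by (induction n arbitrary: i) (auto simp: rowsh_def)

lemma inpd_swap: "inpd s (snd z, fst z) = inpd s z" by (auto simp: inpd_def)

lemma UNIQ:
  assumes A: "absc A s" and s: "s > 0" and Z: "\<And>z. inpd s z \<Longrightarrow> ev A z = 0"
  shows "A = (\<lambda>_. 0)"
proof -
  have P: "absc ((rowsh ^^ m) A) s \<and> (\<forall>z. inpd s z \<longrightarrow> ev ((rowsh ^^ m) A) z = 0)" 
    if "absc B s" "\<And>z. inpd s z \<Longrightarrow> ev B z = 0" "A = B" for m B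
    using that
  proof (induction m arbitrary: A B)
    case 0 then show ?case by simp
  next
    case (Suc m)
    then have IH: "absc ((rowsh ^^ m) B) s" "\<And>z. inpd s z \<Longrightarrow> ev ((rowsh ^^ m) B) z = 0" by auto
    show ?case using absc_rowsh[OF IH(1) s] PEEL(2)[OF IH(1) s IH(2)] Suc.prems(3) by auto
  qed
  have rowm2: "(rowsh ^^ m) A (i, j) = A (i + m, j)" for m i j
    by (rule rowsh_pow)
  show ?thesis
  proof
    fix mn :: "nat \<times> nat"
    obtain m n where mn: "mn = (m,n)" by force
    define B where "B = row0 ((rowsh ^^ m) A)"
    have PB: "absc ((rowsh ^^ m) A) s" "\<And>z. inpd s z \<Longrightarrow> ev ((rowsh ^^ m) A) z = 0"
      using P[OF A Z refl, of m] by auto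
    have Ba: "absc B s" unfolding B_def by (rule absc_row0[OF PB(1)]) (use s in auto)
    have Bz: "ev B z = 0" if "inpd s z" for z unfolding B_def by (rule PEEL(1)[OF PB(1) s PB(2) that])
    have Sa: "absc (fswap B) s" using fswap_props(1)[OF Ba] .
    have Sz: "ev (fswap B) z = 0" if "inpd s z" for z
      using fswap_props(2)[OF Ba] Bz[of "(snd z, fst z)"] that by (simp add: inpd_swap)
    have Q: "absc ((rowsh ^^ n) (fswap B)) s \<and> (\<forall>z. inpd s z \<longrightarrow> ev ((rowsh ^^ n) (fswap B)) z = 0)"
    proof (induction n)
      case 0 then show ?case using Sa Sz by simp
    next
      case (Suc n)
      then have IH: "absc ((rowsh ^^ n) (fswap B)) s" "\<And>z. inpd s z \<Longrightarrow> ev ((rowsh ^^ n) (fswap B)) z = 0"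
        by auto
      show ?case using absc_rowsh[OF IH(1) s] PEEL(2)[OF IH(1) s IH(2)] by simp
    qed
    have Q1: "absc ((rowsh ^^ n) (fswap B)) s" "\<And>z. inpd s z \<Longrightarrow> ev ((rowsh ^^ n) (fswap B)) z = 0"
      using Q by auto
    have "ev (row0 ((rowsh ^^ n) (fswap B))) 0 = 0"
      by (rule PEEL(1)[OF Q1(1) s Q1(2)]) (use s in \<open>auto simp: inpd_def zero_prod_def\<close>)
    then have "row0 ((rowsh ^^ n) (fswap B)) (0,0) = 0" by (simp add: ev_zero)
    moreover have "(rowsh ^^ n) (fswap B) (0, 0) = fswap B (n, 0)"
      by (simp add: rowsh_pow)
    ultimately have "fswap B (n, 0) = 0" by (simp add: row0_def)
    then show "A mn = 0" by (simp add: fswap_def B_def row0_def rowm2 mn)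
  qed
qed

definition ps :: "fps2 \<Rightarrow> real \<Rightarrow> (complex \<times> complex \<Rightarrow> complex) \<Rightarrow> bool" where
  "ps c s g \<longleftrightarrow> s > 0 \<and> absc c s \<and> (\<forall>z. inpd s z \<longrightarrow> g z = ev c z)"

lemma ps_I: "s > 0 \<Longrightarrow> absc c s \<Longrightarrow> (\<And>z. inpd s z \<Longrightarrow> g z = ev c z) \<Longrightarrow> ps c s g"
  unfolding ps_def by blast

lemma ps_pos: "ps c s g \<Longrightarrow> s > 0" unfolding ps_def by blast
lemma ps_absc: "ps c s g \<Longrightarrow> absc c s" unfolding ps_def by blast
lemma ps_D: "ps c s g \<Longrightarrow> inpd s z \<Longrightarrow> g z = ev c z" unfolding ps_def by blast

lemma nhds_inpd:
  "(\<forall>\<^sub>F z in nhds (0::complex \<times> complex). P z) \<longleftrightarrow> (\<exists>e>0. \<forall>z. inpd e z \<longrightarrow> P z)"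
proof
  assume "\<forall>\<^sub>F z in nhds (0::complex \<times> complex). P z"
  then obtain d where d: "d > 0" "\<And>z. dist z 0 < d \<Longrightarrow> P z"
    unfolding eventually_nhds_metric by blast
  have "P z" if "inpd (d/3) z" for z
  proof -
    have "norm z \<le> norm (fst z) + norm (snd z)" using norm_Pair_le[of "fst z" "snd z"] by simp
    also have "\<dots> \<le> 2 * d / 3" using that by (auto simp: inpd_def)
    finally show ?thesis using d by (intro d(2)) auto
  qed
  then show "\<exists>e>0. \<forall>z. inpd e z \<longrightarrow> P z" using d(1) by (intro exI[of _ "d/3"]) auto
next
  assume "\<exists>e>0. \<forall>z. inpd e z \<longrightarrow> P z"
  then obtain e where e: "e > 0" "\<And>z. inpd e z \<Longrightarrow> P z" by blast
  have "P z" if "dist z 0 < e" for z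
  proof (rule e(2))
    have "norm (fst z) \<le> norm z" "norm (snd z) \<le> norm z"
      using norm_fst_le[of "fst z" "snd z"] norm_snd_le[of "snd z" "fst z"] by auto
    then show "inpd e z" using that by (auto simp: inpd_def)
  qed
  then show "\<forall>\<^sub>F z in nhds (0::complex \<times> complex). P z"
    unfolding eventually_nhds_metric using e(1) by blast
qed

lemma nhds_inpdE:
  assumes "\<forall>\<^sub>F z in nhds (0::complex \<times> complex). P z"
  obtains e where "e > 0" "\<And>z. inpd e z \<Longrightarrow> P z"
  using assms[unfolded nhds_inpd] by blast

lemma nhds_inpdI:
  assumes "e > 0" "\<And>z. inpd e z \<Longrightarrow> P z"
  shows "\<forall>\<^sub>F z in nhds (0::complex \<times> complex). P z"
  unfolding nhds_inpd using assms by blast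

lemma inpd_mono: "inpd t z \<Longrightarrow> t \<le> s \<Longrightarrow> inpd s z" by (auto simp: inpd_def)

lemma inpd_zero: "s \<ge> 0 \<Longrightarrow> inpd s 0" by (simp add: inpd_def zero_prod_def)

lemma ps_mono: "ps c s g \<Longrightarrow> 0 < t \<Longrightarrow> t \<le> s \<Longrightarrow> ps c t g"
proof -
  assume a: "ps c s g" "0 < t" "t \<le> s"
  show "ps c t g"
  proof (rule ps_I)
    show "absc c t" using absc_mono[OF ps_absc[OF a(1)]] a by simp
    fix z assume "inpd t z"
    then show "g z = ev c z" using ps_D[OF a(1)] inpd_mono a(3) by blast
  qed (use a in auto)
qed

lemma ps_expands: "ps c s g \<Longrightarrow> expands_at0 c g"
proof -
  assume a: "ps c s g"
  have "((\<lambda>(i, j). c (i, j) * z1 ^ i * z2 ^ j) has_sum g (z1, z2)) UNIV"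
    if "norm z1 < s" "norm z2 < s" for z1 z2
  proof -
    have i: "inpd s (z1, z2)" using that by (simp add: inpd_def)
    have "(mon c (z1, z2) has_sum ev c (z1, z2)) UNIV" by (rule ev_has_sum[OF ps_absc[OF a] i])
    moreover have "mon c (z1,z2) = (\<lambda>(i,j). c (i,j) * z1 ^ i * z2 ^ j)" by (simp add: mon_def)
    moreover have "g (z1, z2) = ev c (z1, z2)" by (rule ps_D[OF a i])
    ultimately show ?thesis by simp
  qed
  then show ?thesis unfolding expands_at0_def using ps_pos[OF a] by blast
qed

lemma expands_ps:
  assumes "expands_at0 c g" shows "\<exists>s. ps c s g"
proof -
  obtain r where r: "r > 0" "\<And>z1 z2. norm z1 < r \<Longrightarrow> norm z2 < r \<Longrightarrow>
      ((\<lambda>(i,j). c (i,j) * z1 ^ i * z2 ^ j) has_sum g (z1, z2)) UNIV"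
    using assms unfolding expands_at0_def by blast
  define s where "s = r / 2"
  have s: "s > 0" "s < r" using r by (auto simp: s_def)
  have mc: "mon c z = (\<lambda>(i,j). c (i,j) * fst z ^ i * snd z ^ j)" for z by (simp add: mon_def)
  have hs: "(mon c (of_real s, of_real s) has_sum g (of_real s, of_real s)) UNIV"
    unfolding mc fst_conv snd_conv by (rule r(2)) (use s in auto)
  then have "mon c (of_real s, of_real s) summable_on UNIV" by (rule has_sum_imp_summable)
  then have "(\<lambda>x. norm (mon c (of_real s, of_real s) x)) summable_on UNIV"
    using summable_on_iff_abs_summable_on_complex by blast
  moreover have "(\<lambda>x. norm (mon c (of_real s, of_real s) x)) = amaj c s"
  proof
    fix x :: "nat \<times> nat"
    obtain i j where x: "x = (i,j)" by force
    show "norm (mon c (of_real s, of_real s) x) = amaj c s x"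
      using s by (simp add: x mon_def amaj_def norm_mult norm_power power_add)
  qed
  ultimately have A: "absc c s" by (simp add: absc_def)
  have "g z = ev c z" if "inpd s z" for z
  proof -
    have "(mon c z has_sum g (fst z, snd z)) UNIV"
      unfolding mc by (rule r(2)) (use that s in \<open>auto simp: inpd_def\<close>)
    then show ?thesis by (simp add: ev_def infsumI)
  qed
  then show ?thesis using ps_I[OF s(1) A] by blast
qed

lemma conv0_iff: "conv0 g \<longleftrightarrow> (\<exists>c s. ps c s g)"
proof
  assume "conv0 g"
  then obtain c where "expands_at0 c g" unfolding conv0_def by blast
  then show "\<exists>c s. ps c s g" using expands_ps by blast
next
  assume "\<exists>c s. ps c s g"
  then obtain c s where "ps c s g" by blast
  then have "expands_at0 c g" by (rule ps_expands)
  then show "conv0 g" unfolding conv0_def by blast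
qed

lemma ps_unique:
  assumes "ps c s g" "ps d t g'" "\<forall>\<^sub>F z in nhds 0. g z = g' z"
  shows "c = d"
proof -
  obtain e where e: "e > 0" "\<And>z. inpd e z \<Longrightarrow> g z = g' z" using nhds_inpdE[OF assms(3)] by blast
  define u where "u = min (min s t) e"
  have u: "u > 0" "u \<le> s" "u \<le> t" "u \<le> e" using e ps_pos[OF assms(1)] ps_pos[OF assms(2)] by (auto simp: u_def)
  have C: "absc c u" by (rule absc_mono[OF ps_absc[OF assms(1)]]) (use u in auto)
  have D: "absc d u" by (rule absc_mono[OF ps_absc[OF assms(2)]]) (use u in auto)
  have "ev (\<lambda>mn. c mn - d mn) z = 0" if "inpd u z" for z
  proof -
    have "ev c z = g z" "ev d z = g' z"
      using ps_D[OF assms(1) inpd_mono[OF that u(2)]] ps_D[OF assms(2) inpd_mono[OF that u(3)]] by auto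
    then show ?thesis using DIFF(3)[OF _ C D that] e(2)[OF inpd_mono[OF that u(4)]] u by simp
  qed
  then have z: "(\<lambda>mn. c mn - d mn) = (\<lambda>_. 0)"
    by (intro UNIQ[OF DIFF(1)[OF _ C D] u(1)]) (use u in auto)
  show ?thesis
  proof
    fix mn show "c mn = d mn" using fun_cong[OF z, of mn] by simp
  qed
qed

lemma taylor_ps: "ps c s g \<Longrightarrow> taylor g = c"
proof -
  assume a: "ps c s g"
  have "expands_at0 (taylor g) g" unfolding taylor_def by (rule someI[where P="\<lambda>c. expands_at0 c g", OF ps_expands[OF a]])
  then obtain t where t: "ps (taylor g) t g" using expands_ps by blast
  have "\<forall>\<^sub>F z in nhds 0. g z = g z" by simp
  then show ?thesis using ps_unique[OF t a] by simp
qed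

lemma conv0_ps: "conv0 g \<Longrightarrow> \<exists>s. ps (taylor g) s g"
proof -
  assume "conv0 g"
  then obtain c s where cs: "ps c s g" using conv0_iff by blast
  then have "taylor g = c" by (rule taylor_ps)
  then show ?thesis using cs by blast
qed

lemma taylor_eq: "conv0 g \<Longrightarrow> conv0 g' \<Longrightarrow> \<forall>\<^sub>F z in nhds 0. g z = g' z \<Longrightarrow> taylor g = taylor g'"
proof -
  assume a: "conv0 g" "conv0 g'" "\<forall>\<^sub>F z in nhds 0. g z = g' z"
  obtain s t where "ps (taylor g) s g" "ps (taylor g') t g'" using a(1,2) conv0_ps by blast
  then show ?thesis using ps_unique a(3) by blast
qed

lemma eq_taylor:
  assumes "conv0 g" "conv0 g'" "taylor g = taylor g'"
  shows "\<forall>\<^sub>F z in nhds 0. g z = g' z"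
proof -
  obtain s t where "ps (taylor g) s g" "ps (taylor g') t g'" using assms conv0_ps by blast
  note st = this
  have "g z = g' z" if "inpd (min s t) z" for z
    using ps_D[OF st(1) inpd_mono[OF that]] ps_D[OF st(2) inpd_mono[OF that]] assms(3) by auto
  moreover have "min s t > 0" using ps_pos[OF st(1)] ps_pos[OF st(2)] by simp
  ultimately show ?thesis by (intro nhds_inpdI[of "min s t"]) auto
qed

lemma conv0_at0: "conv0 g \<Longrightarrow> g 0 = taylor g (0,0)"
proof -
  assume "conv0 g"
  then obtain s where s: "ps (taylor g) s g" using conv0_ps by blast
  then have "g 0 = ev (taylor g) 0" using ps_D[OF s inpd_zero] ps_pos[OF s] by simp
  then show ?thesis by (simp add: ev_zero)
qed

lemma ps_conv0: "ps c s g \<Longrightarrow> conv0 g \<and> taylor g = c"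
proof -
  assume a: "ps c s g"
  have "conv0 g" unfolding conv0_iff using a by blast
  then show ?thesis using taylor_ps[OF a] by simp
qed

lemma ps_min:
  assumes "ps c s g" "ps d t h"
  shows "ps c (min s t) g" "ps d (min s t) h"
proof -
  have p: "min s t > 0" using ps_pos[OF assms(1)] ps_pos[OF assms(2)] by simp
  show "ps c (min s t) g" by (rule ps_mono[OF assms(1) p]) simp
  show "ps d (min s t) h" by (rule ps_mono[OF assms(2) p]) simp
qed

lemma F_add:
  assumes "conv0 a" "conv0 b"
  shows "conv0 (\<lambda>z. a z + b z) \<and> taylor (\<lambda>z. a z + b z) = (\<lambda>mn. taylor a mn + taylor b mn)"
proof -
  obtain s t where s: "ps (taylor a) s a" and t: "ps (taylor b) t b" using assms conv0_ps by blast
  define u where "u = min s t"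
  have u: "ps (taylor a) u a" "ps (taylor b) u b" using ps_min[OF s t] by (auto simp: u_def)
  have u0: "u > 0" using ps_pos[OF u(1)] .
  have "ps (\<lambda>mn. taylor a mn + taylor b mn) u (\<lambda>z. a z + b z)"
  proof (rule ps_I[OF u0 ADD(1)[OF _ ps_absc[OF u(1)] ps_absc[OF u(2)]]])
    fix z assume z: "inpd u z"
    show "a z + b z = ev (\<lambda>mn. taylor a mn + taylor b mn) z"
      using ps_D[OF u(1) z] ps_D[OF u(2) z] ADD(3)[OF _ ps_absc[OF u(1)] ps_absc[OF u(2)] z] u0 by simp
  qed (use u0 in simp)
  then show ?thesis by (rule ps_conv0)
qed

lemma F_diff:
  assumes "conv0 a" "conv0 b"
  shows "conv0 (\<lambda>z. a z - b z) \<and> taylor (\<lambda>z. a z - b z) = (\<lambda>mn. taylor a mn - taylor b mn)"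
proof -
  obtain s t where s: "ps (taylor a) s a" and t: "ps (taylor b) t b" using assms conv0_ps by blast
  define u where "u = min s t"
  have u: "ps (taylor a) u a" "ps (taylor b) u b" using ps_min[OF s t] by (auto simp: u_def)
  have u0: "u > 0" using ps_pos[OF u(1)] .
  have "ps (\<lambda>mn. taylor a mn - taylor b mn) u (\<lambda>z. a z - b z)"
  proof (rule ps_I[OF u0 DIFF(1)[OF _ ps_absc[OF u(1)] ps_absc[OF u(2)]]])
    fix z assume z: "inpd u z"
    show "a z - b z = ev (\<lambda>mn. taylor a mn - taylor b mn) z"
      using ps_D[OF u(1) z] ps_D[OF u(2) z] DIFF(3)[OF _ ps_absc[OF u(1)] ps_absc[OF u(2)] z] u0 by simp
  qed (use u0 in simp)
  then show ?thesis by (rule ps_conv0)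
qed

lemma F_mult:
  assumes "conv0 a" "conv0 b"
  shows "conv0 (\<lambda>z. a z * b z) \<and> taylor (\<lambda>z. a z * b z) = fmult (taylor a) (taylor b)"
proof -
  obtain s t where s: "ps (taylor a) s a" and t: "ps (taylor b) t b" using assms conv0_ps by blast
  define u where "u = min s t"
  have u: "ps (taylor a) u a" "ps (taylor b) u b" using ps_min[OF s t] by (auto simp: u_def)
  have u0: "u > 0" using ps_pos[OF u(1)] .
  have "ps (fmult (taylor a) (taylor b)) u (\<lambda>z. a z * b z)"
  proof (rule ps_I[OF u0 PROD(1)[OF u0 ps_absc[OF u(1)] ps_absc[OF u(2)]]])
    fix z assume z: "inpd u z"
    show "a z * b z = ev (fmult (taylor a) (taylor b)) z"
      using ps_D[OF u(1) z] ps_D[OF u(2) z] PROD(3)[OF u0 ps_absc[OF u(1)] ps_absc[OF u(2)] z] by simp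
  qed
  then show ?thesis by (rule ps_conv0)
qed

lemma F_const: "conv0 (\<lambda>z. k) \<and> taylor (\<lambda>z. k) = cst k"
proof -
  have "ps (cst k) 1 (\<lambda>z. k)" by (rule ps_I) (simp_all add: cst_props)
  then show ?thesis by (rule ps_conv0)
qed

lemma F_fst: "conv0 fst \<and> taylor fst = fX"
proof -
  have "ps fX 1 fst" by (rule ps_I) (simp_all add: fX_props)
  then show ?thesis by (rule ps_conv0)
qed

lemma F_snd: "conv0 snd \<and> taylor snd = fY"
proof -
  have "ps fY 1 snd" by (rule ps_I) (simp_all add: fY_props)
  then show ?thesis by (rule ps_conv0)
qed

lemma F_swap:
  assumes "conv0 a"
  shows "conv0 (\<lambda>z. a (snd z, fst z)) \<and> taylor (\<lambda>z. a (snd z, fst z)) = fswap (taylor a)"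
proof -
  obtain s where s: "ps (taylor a) s a" using assms conv0_ps by blast
  have "ps (fswap (taylor a)) s (\<lambda>z. a (snd z, fst z))"
  proof (rule ps_I[OF ps_pos[OF s] fswap_props(1)[OF ps_absc[OF s]]])
    fix z assume "inpd s z"
    then show "a (snd z, fst z) = ev (fswap (taylor a)) z"
      using ps_D[OF s, of "(snd z, fst z)"] fswap_props(2)[OF ps_absc[OF s]] by (simp add: inpd_swap)
  qed
  then show ?thesis by (rule ps_conv0)
qed

lemma F_comp:
  assumes a: "conv0 a" and P: "conv0 P" and Q: "conv0 Q" and P0: "P 0 = 0" and Q0: "Q 0 = 0"
  shows "conv0 (\<lambda>z. a (P z, Q z)) \<and>
    taylor (\<lambda>z. a (P z, Q z)) = fcomp (taylor a) (taylor P) (taylor Q)"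
proof -
  obtain r where r: "ps (taylor a) r a" using a conv0_ps by blast
  obtain s1 s2 where s1: "ps (taylor P) s1 P" and s2: "ps (taylor Q) s2 Q" using P Q conv0_ps by blast
  define s0 where "s0 = min s1 s2"
  have s0: "ps (taylor P) s0 P" "ps (taylor Q) s0 Q" using ps_min[OF s1 s2] by (auto simp: s0_def)
  have tP0: "taylor P (0,0) = 0" using conv0_at0[OF P] P0 by simp
  have tQ0: "taylor Q (0,0) = 0" using conv0_at0[OF Q] Q0 by simp
  obtain s where s: "s > 0" "s \<le> s0" "absc (fcomp (taylor a) (taylor P) (taylor Q)) s"
     "\<And>z. inpd s z \<Longrightarrow> inpd r (ev (taylor P) z, ev (taylor Q) z) \<and>
        ev (fcomp (taylor a) (taylor P) (taylor Q)) z = ev (taylor a) (ev (taylor P) z, ev (taylor Q) z)"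
    using COMP[OF ps_pos[OF r] ps_absc[OF r] ps_pos[OF s0(1)] ps_absc[OF s0(1)] ps_absc[OF s0(2)] tP0 tQ0]
    by blast
  have "ps (fcomp (taylor a) (taylor P) (taylor Q)) s (\<lambda>z. a (P z, Q z))"
  proof (rule ps_I[OF s(1) s(3)])
    fix z assume z: "inpd s z"
    have "P z = ev (taylor P) z" "Q z = ev (taylor Q) z"
      using ps_D[OF s0(1) inpd_mono[OF z s(2)]] ps_D[OF s0(2) inpd_mono[OF z s(2)]] by auto
    then show "a (P z, Q z) = ev (fcomp (taylor a) (taylor P) (taylor Q)) z"
      using s(4)[OF z] ps_D[OF r] by auto
  qed
  then show ?thesis by (rule ps_conv0)
qed

lemma F_cont:
  assumes "conv0 a" "e > 0"
  shows "\<forall>\<^sub>F z in nhds 0. norm (a z - a 0) \<le> e"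
proof -
  obtain s where s: "ps (taylor a) s a" using assms conv0_ps by blast
  have s0: "s > 0" using ps_pos[OF s] .
  define M where "M = Mj (taylor a) s"
  have M: "M \<ge> 0" using s0 Mj_nonneg by (simp add: M_def)
  define t where "t = min s (e * s / (M + 1))"
  have t: "t > 0" "t \<le> s" using s0 assms M by (auto simp: t_def)
  have "norm (a z - a 0) \<le> e" if z: "inpd t z" for z
  proof -
    have "a z = ev (taylor a) z" "a 0 = taylor a (0,0)"
      using ps_D[OF s inpd_mono[OF z t(2)]] conv0_at0[OF assms(1)] by auto
    then have "norm (a z - a 0) \<le> t / s * M"
      using NEAR0[OF ps_absc[OF s] s0 _ t(2) z] t by (simp add: M_def)
    also have "\<dots> \<le> (e * s / (M + 1)) / s * M"
      using t s0 M by (intro mult_right_mono divide_right_mono) (auto simp: t_def)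
    also have "\<dots> \<le> e"
    proof -
      have "M / (M + 1) \<le> 1" using M by simp
      then have "e * (M / (M + 1)) \<le> e * 1" using assms(2) by (intro mult_left_mono) auto
      moreover have "(e * s / (M + 1)) / s * M = e * (M / (M + 1))"
      proof -
        have "M + 1 \<noteq> 0" "s \<noteq> 0" using M s0 by auto
        then show ?thesis by (simp add: divide_simps)
      qed
      ultimately show ?thesis by simp
    qed
    finally show ?thesis .
  qed
  then show ?thesis by (intro nhds_inpdI[OF t(1)])
qed

lemma EV_TRANS:
  assumes ev: "\<forall>\<^sub>F z in nhds 0. P z" and f: "conv0 (\<lambda>z. fst (\<phi> z))" and g: "conv0 (\<lambda>z. snd (\<phi> z))"
    and z0: "\<phi> 0 = 0"
  shows "\<forall>\<^sub>F z in nhds 0. P (\<phi> z)"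
proof -
  obtain e where e: "e > 0" "\<And>z. inpd e z \<Longrightarrow> P z" using nhds_inpdE[OF ev] by blast
  have "\<forall>\<^sub>F z in nhds 0. norm (fst (\<phi> z) - fst (\<phi> 0)) \<le> e" by (rule F_cont[OF f e(1)])
  moreover have "\<forall>\<^sub>F z in nhds 0. norm (snd (\<phi> z) - snd (\<phi> 0)) \<le> e" by (rule F_cont[OF g e(1)])
  ultimately show ?thesis
  proof eventually_elim
    case (elim z)
    then have "inpd e (\<phi> z)" using z0 by (simp add: inpd_def zero_prod_def)
    then show ?case by (rule e(2))
  qed
qed

lemma F_divX:
  assumes F: "conv0 F" and Z: "\<forall>\<^sub>F z in nhds 0. fst z = 0 \<longrightarrow> F z = 0"
  shows "\<exists>G. conv0 G \<and> (\<forall>\<^sub>F z in nhds 0. F z = fst z * G z)"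
proof -
  obtain s where s: "ps (taylor F) s F" using F conv0_ps by blast
  obtain e where e: "e > 0" "\<And>z. inpd e z \<Longrightarrow> fst z = 0 \<longrightarrow> F z = 0" using nhds_inpdE[OF Z] by blast
  define u where "u = min s e"
  have u: "u > 0" "u \<le> s" "u \<le> e" using ps_pos[OF s] e by (auto simp: u_def)
  have A: "absc (taylor F) u" using absc_mono[OF ps_absc[OF s]] u by auto
  have G: "ps (rowsh (taylor F)) u (ev (rowsh (taylor F)))"
    by (rule ps_I[OF u(1) absc_rowsh[OF A u(1)]]) simp
  have "F z = fst z * ev (rowsh (taylor F)) z" if z: "inpd u z" for z
  proof -
    have z0: "inpd u (0, snd z)" using z u by (auto simp: inpd_def)
    have "ev (taylor F) (0, snd z) = 0"
      using e(2)[OF inpd_mono[OF z0 u(3)]] ps_D[OF s inpd_mono[OF z0 u(2)]] by simp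
    then show ?thesis using ev_decomp[OF A u(1) z] ps_D[OF s inpd_mono[OF z u(2)]] by simp
  qed
  then have "\<forall>\<^sub>F z in nhds 0. F z = fst z * ev (rowsh (taylor F)) z" by (intro nhds_inpdI[OF u(1)])
  then show ?thesis using ps_conv0[OF G] by blast
qed

lemma F_cancelX:
  assumes A: "conv0 A" and B: "conv0 B" and E: "\<forall>\<^sub>F z in nhds 0. fst z * A z = fst z * B z"
  shows "\<forall>\<^sub>F z in nhds 0. A z = B z"
proof -
  have D: "conv0 (\<lambda>z. A z - B z)" using F_diff[OF A B] by blast
  define d where "d = taylor (\<lambda>z. A z - B z)"
  obtain s where s: "ps d s (\<lambda>z. A z - B z)" using D conv0_ps d_def by blast
  obtain e where e: "e > 0" "\<And>z. inpd e z \<Longrightarrow> fst z * A z = fst z * B z" using nhds_inpdE[OF E] by blast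
  define u where "u = min s e"
  have u: "u > 0" "u \<le> s" "u \<le> e" using ps_pos[OF s] e by (auto simp: u_def)
  have Ad: "absc d u" using absc_mono[OF ps_absc[OF s]] u by auto
  have evd: "ev d z = A z - B z" if "inpd u z" for z
    using ps_D[OF s inpd_mono[OF that u(2)]] by simp
  have nz: "ev d z = 0" if "inpd u z" "fst z \<noteq> 0" for z
    using evd[OF that(1)] e(2)[OF inpd_mono[OF that(1) u(3)]] that(2) by simp
  have "A z = B z" if z: "inpd u z" for z
  proof (cases "fst z = 0")
    case True
    then have "z = (0, snd z)" by (cases z) auto
    moreover have "ev d (0, snd z) = 0"
      by (rule ROW0[OF Ad u(1) nz]) (use z in \<open>auto simp: inpd_def\<close>)
    ultimately show ?thesis using evd[OF z] by simp
  next
    case False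
    then show ?thesis using nz[OF z] evd[OF z] by simp
  qed
  then show ?thesis by (intro nhds_inpdI[OF u(1)])
qed

lemma conv0_cong: "conv0 g \<Longrightarrow> (\<And>z. g z = h z) \<Longrightarrow> conv0 h"
proof -
  assume "conv0 g" "\<And>z. g z = h z"
  then have "g = h" by auto
  then show "conv0 h" using \<open>conv0 g\<close> by simp
qed

lemma conv0_sw: "conv0 a \<Longrightarrow> conv0 (\<lambda>z. a (snd z, fst z))" using F_swap by blast

lemma EV_SWAP:
  fixes P :: "complex \<times> complex \<Rightarrow> bool"
  assumes "\<forall>\<^sub>F z in nhds 0. P z"
  shows "\<forall>\<^sub>F z in nhds 0. P (snd z, fst z)"
proof -
  have "\<forall>\<^sub>F z in nhds 0. P ((\<lambda>z. (snd z, fst z)) z)"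
    by (rule EV_TRANS[where \<phi>="\<lambda>z. (snd z, fst z)", OF assms]) (simp_all add: F_snd F_fst zero_prod_def)
  then show ?thesis by simp
qed

lemma F_divY:
  assumes F: "conv0 F" and Z: "\<forall>\<^sub>F z in nhds 0. snd z = 0 \<longrightarrow> F z = 0"
  shows "\<exists>G. conv0 G \<and> (\<forall>\<^sub>F z in nhds 0. F z = snd z * G z)"
proof -
  have F': "conv0 (\<lambda>z. F (snd z, fst z))" by (rule conv0_sw[OF F])
  have "\<forall>\<^sub>F z in nhds 0. snd (snd z, fst z) = 0 \<longrightarrow> F (snd z, fst z) = 0" by (rule EV_SWAP[OF Z])
  then have "\<forall>\<^sub>F z in nhds 0. fst z = 0 \<longrightarrow> F (snd z, fst z) = 0" by simp
  then obtain G where G: "conv0 G" "\<forall>\<^sub>F z in nhds 0. F (snd z, fst z) = fst z * G z"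
    using F_divX[OF F'] by blast
  have "\<forall>\<^sub>F z in nhds 0. F (snd (snd z, fst z), fst (snd z, fst z)) = fst (snd z, fst z) * G (snd z, fst z)"
    by (rule EV_SWAP[OF G(2)])
  then have "\<forall>\<^sub>F z in nhds 0. F z = snd z * G (snd z, fst z)" by simp
  then show ?thesis using conv0_sw[OF G(1)] by blast
qed

lemma F_cancelY:
  assumes A: "conv0 A" and B: "conv0 B" and E: "\<forall>\<^sub>F z in nhds 0. snd z * A z = snd z * B z"
  shows "\<forall>\<^sub>F z in nhds 0. A z = B z"
proof -
  have "\<forall>\<^sub>F z in nhds 0. snd (snd z, fst z) * A (snd z, fst z) = snd (snd z, fst z) * B (snd z, fst z)"
    by (rule EV_SWAP[OF E])
  then have "\<forall>\<^sub>F z in nhds 0. fst z * A (snd z, fst z) = fst z * B (snd z, fst z)" by simp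
  then have "\<forall>\<^sub>F z in nhds 0. A (snd z, fst z) = B (snd z, fst z)"
    by (rule F_cancelX[OF conv0_sw[OF A] conv0_sw[OF B]])
  then have "\<forall>\<^sub>F z in nhds 0. A (snd (snd z, fst z), fst (snd z, fst z)) = B (snd (snd z, fst z), fst (snd z, fst z))"
    by (rule EV_SWAP)
  then show ?thesis by simp
qed

lemma F_diff2:
  assumes a: "conv0 a" and U: "conv0 U" and V: "conv0 V" and U0: "U 0 = 0" and V0: "V 0 = 0"
  shows "\<exists>K1 K2. conv0 K1 \<and> conv0 K2 \<and>
    (\<forall>\<^sub>F z in nhds 0. a (fst z + U z, snd z + V z) - a z = U z * K1 z + V z * K2 z)"
proof -
  obtain r where r: "ps (taylor a) r a" using a conv0_ps by blast
  obtain s1 s2 where s1: "ps (taylor U) s1 U" and s2: "ps (taylor V) s2 V" using U V conv0_ps by blast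
  define s0 where "s0 = min s1 s2"
  have s0: "ps (taylor U) s0 U" "ps (taylor V) s0 V" using ps_min[OF s1 s2] by (auto simp: s0_def)
  have s0p: "s0 > 0" using ps_pos[OF s0(1)] .
  have tU0: "taylor U (0,0) = 0" using conv0_at0[OF U] U0 by simp
  have tV0: "taylor V (0,0) = 0" using conv0_at0[OF V] V0 by simp
  have X0: "fX (0,0) = 0" and Y0: "fY (0,0) = 0" by (simp_all add: fX_def fY_def)
  obtain s K1 K2 where s: "s > 0" "s \<le> s0" and K: "absc K1 s" "absc K2 s"
    and m: "\<And>z. inpd s z \<Longrightarrow> inpd r (ev fX z + ev (taylor U) z, ev fY z + ev (taylor V) z) \<and>
        inpd r (ev fX z, ev fY z) \<and>
        ev (taylor a) (ev fX z + ev (taylor U) z, ev fY z + ev (taylor V) z) - ev (taylor a) (ev fX z, ev fY z) =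
        ev (taylor U) z * ev K1 z + ev (taylor V) z * ev K2 z"
    using DIFF2[OF ps_pos[OF r] ps_absc[OF r] s0p fX_props(1) ps_absc[OF s0(1)] fY_props(1) ps_absc[OF s0(2)]
        X0 tU0 Y0 tV0] by blast
  have k1: "ps K1 s (ev K1)" by (rule ps_I[OF s(1) K(1)]) simp
  have k2: "ps K2 s (ev K2)" by (rule ps_I[OF s(1) K(2)]) simp
  have "a (fst z + U z, snd z + V z) - a z = U z * ev K1 z + V z * ev K2 z" if z: "inpd s z" for z
  proof -
    have zs: "inpd s0 z" by (rule inpd_mono[OF z s(2)])
    have e1: "U z = ev (taylor U) z" "V z = ev (taylor V) z" using ps_D[OF s0(1) zs] ps_D[OF s0(2) zs] by auto
    note mm = m[OF z, unfolded fX_props(3) fY_props(3) e1[symmetric]]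
    have "a (fst z + U z, snd z + V z) = ev (taylor a) (fst z + U z, snd z + V z)"
      using ps_D[OF r] mm by blast
    moreover have "a z = ev (taylor a) (fst z, snd z)" using ps_D[OF r] mm by (metis prod.collapse)
    ultimately show ?thesis using mm by (simp add: e1)
  qed
  then have "\<forall>\<^sub>F z in nhds 0. a (fst z + U z, snd z + V z) - a z = U z * ev K1 z + V z * ev K2 z"
    by (intro nhds_inpdI[OF s(1)])
  then show ?thesis using ps_conv0[OF k1] ps_conv0[OF k2] by blast
qed

definition geo :: fps2 where "geo = (\<lambda>(i,j). if j = 0 then 1 else 0)"

lemma geo_props: "absc geo (1/2)" "\<And>z. inpd (1/2) z \<Longrightarrow> ev geo z = 1 / (1 - fst z)"
proof -
  define h where "h = (\<lambda>i::nat. (i, 0::nat))"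
  have inj: "inj_on h UNIV" by (auto simp: h_def inj_on_def)
  have hU: "h ` UNIV = {(i,j). j = 0}" by (auto simp: h_def image_def)
  have geo_has: "((\<lambda>i::nat. w ^ i) has_sum (1 / (1 - w))) UNIV" if "norm w < 1" for w :: "'a::{real_normed_field,banach}"
  proof -
    have "summable (\<lambda>n. norm (w ^ n))" using that by (simp add: norm_power summable_geometric)
    moreover have "(\<lambda>n. w ^ n) sums (1 / (1 - w))" using geometric_sums[OF that] by simp
    ultimately show ?thesis by (rule norm_summable_imp_has_sum)
  qed
  have lift: "(g has_sum x) UNIV" if "((g \<circ> h) has_sum x) UNIV" "\<And>i j. j \<noteq> 0 \<Longrightarrow> g (i,j) = 0"
    for g :: "nat \<times> nat \<Rightarrow> 'b::{comm_monoid_add,topological_space}" and x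
  proof -
    have "(g has_sum x) (h ` UNIV)" using that(1) has_sum_reindex[OF inj] by blast
    then show ?thesis by (subst (asm) has_sum_cong_neutral[where T=UNIV and g=g]) (auto simp: hU that(2))
  qed
  have "(amaj geo (1/2) has_sum (1 / (1 - 1/2))) UNIV"
  proof (rule lift)
    have "(amaj geo (1/2) \<circ> h) = (\<lambda>i. (1/2::real) ^ i)" by (auto simp: h_def amaj_def geo_def)
    then show "((amaj geo (1/2) \<circ> h) has_sum (1 / (1 - 1/2))) UNIV" using geo_has[of "1/2::real"] by simp
  qed (auto simp: amaj_def geo_def)
  then show "absc geo (1/2)" by (auto simp: absc_def has_sum_imp_summable)
  fix z assume z: "inpd (1/2) z"
  have "(mon geo z has_sum (1 / (1 - fst z))) UNIV"
  proof (rule lift)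
    have "(mon geo z \<circ> h) = (\<lambda>i. fst z ^ i)" by (auto simp: h_def mon_def geo_def)
    moreover have "norm (fst z) < 1" using z by (auto simp: inpd_def)
    ultimately show "((mon geo z \<circ> h) has_sum (1 / (1 - fst z))) UNIV" using geo_has[of "fst z"] by simp
  qed (auto simp: mon_def geo_def)
  then show "ev geo z = 1 / (1 - fst z)" by (simp add: ev_def infsumI)
qed

lemma F_inv:
  assumes a: "conv0 a" and a0: "a 0 \<noteq> 0"
  shows "\<exists>b. conv0 b \<and> (\<forall>\<^sub>F z in nhds 0. a z * b z = 1)"
proof -
  define L where "L = (\<lambda>z. 1 - a z / a 0)"
  have La: "conv0 L"
  proof -
    have "conv0 (\<lambda>z. a z * (1 / a 0))" using F_mult[OF a F_const[THEN conjunct1]] by blast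
    then have "conv0 (\<lambda>z. 1 - a z * (1 / a 0))" using F_diff[OF F_const[THEN conjunct1]] by blast
    then show ?thesis unfolding L_def by (rule conv0_cong) simp
  qed
  have L0: "L 0 = 0" using a0 by (simp add: L_def)
  have G: "ps geo (1/2) (ev geo)" by (rule ps_I[OF _ geo_props(1)]) auto
  have Ga: "conv0 (ev geo)" using ps_conv0[OF G] by blast
  have H: "conv0 (\<lambda>z. ev geo (L z, (\<lambda>z. 0) z))"
    using F_comp[OF Ga La F_const[THEN conjunct1] L0] by simp
  define b where "b = (\<lambda>z. ev geo (L z, 0) * (1 / a 0))"
  have ba: "conv0 b"
  proof -
    have "conv0 (\<lambda>z. ev geo (L z, (\<lambda>z. 0) z) * (\<lambda>z. 1 / a 0) z)"
      using F_mult[OF H F_const[THEN conjunct1]] by blast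
    then show ?thesis unfolding b_def by (rule conv0_cong) simp
  qed
  have "\<forall>\<^sub>F z in nhds 0. norm (L z - L 0) \<le> 1/2" by (rule F_cont[OF La]) simp
  then have "\<forall>\<^sub>F z in nhds 0. a z * b z = 1"
  proof (rule eventually_mono)
    fix z assume "norm (L z - L 0) \<le> 1/2"
    then have n: "norm (L z) \<le> 1/2" using L0 by simp
    then have "inpd (1/2) (L z, 0)" by (simp add: inpd_def)
    then have e: "ev geo (L z, 0) = 1 / (1 - L z)" using geo_props(2) by simp
    have "L z \<noteq> 1" using n by auto
    moreover have "1 - L z = a z / a 0" by (simp add: L_def)
    ultimately have "a z \<noteq> 0" using a0 by auto
    then show "a z * b z = 1" using a0 unfolding b_def e by (simp add: L_def field_simps)
  qed
  then show ?thesis using ba by blast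
qed

lemma DERIV_EV:
  assumes d: "(F has_derivative L) (at 0)" and F0: "F 0 = 0" and e: "e > 0"
  shows "\<forall>\<^sub>F z in nhds 0. norm (F z - L z) \<le> e * norm z"
proof -
  obtain d where d: "d > 0" "\<And>y. norm y < d \<Longrightarrow> norm (F y - F 0 - L y) \<le> e * norm y"
    using d[unfolded has_derivative_at_alt] e by force
  show ?thesis unfolding eventually_nhds_metric
    by (rule exI[of _ d]) (use d F0 in \<open>auto simp: dist_norm\<close>)
qed

definition trunc :: "nat \<Rightarrow> fps2 \<Rightarrow> fps2" where
  "trunc N a = (\<lambda>(i,j). if i + j \<le> N then a (i,j) else 0)"

lemma trunc_ps: "ps (trunc N a) 1 (ev (trunc N a))"
proof (rule ps_I)
  show "absc (trunc N a) 1"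
    by (rule fin_supp(1)[where B="{..N} \<times> {..N}"]) (auto simp: trunc_def split: if_splits)
qed auto

lemma trunc_conv0: "conv0 (ev (trunc N a)) \<and> taylor (ev (trunc N a)) = trunc N a"
  by (rule ps_conv0[OF trunc_ps])

lemma trunc_trunc: "trunc N (trunc N a) = trunc N a" by (auto simp: trunc_def)

lemma LOC_MULT: "m + n \<le> N \<Longrightarrow> fmult a b (m,n) = fmult (trunc N a) (trunc N b) (m,n)"
  unfolding fmult_def prod.case
  by (intro sum.cong refl) (auto simp: trunc_def)

lemma LOC_COMP: "m + n \<le> N \<Longrightarrow> fcomp a P Q (m,n) = fcomp (trunc N a) P Q (m,n)"
  unfolding fcomp_def prod.case
  by (intro sum.cong refl) (auto simp: trunc_def)

lemma trunc_fmult: "trunc N (fmult a b) = trunc N (fmult (trunc N a) (trunc N b))"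
proof
  fix x :: "nat \<times> nat"
  obtain m n where x: "x = (m,n)" by force
  show "trunc N (fmult a b) x = trunc N (fmult (trunc N a) (trunc N b)) x"
    using LOC_MULT[of m n N a b] by (simp add: trunc_def x)
qed

lemma trunc_fcomp: "trunc N (fcomp a P Q) = trunc N (fcomp (trunc N a) P Q)"
proof
  fix x :: "nat \<times> nat"
  obtain m n where x: "x = (m,n)" by force
  show "trunc N (fcomp a P Q) x = trunc N (fcomp (trunc N a) P Q) x"
    using LOC_COMP[of m n N a P Q] by (simp add: trunc_def x)
qed

lemma fmult_fin_assoc:
  "fmult (fmult (trunc N a) (trunc N b)) (trunc N c) = fmult (trunc N a) (fmult (trunc N b) (trunc N c))"
proof -
  note A = trunc_conv0[of N a] and B = trunc_conv0[of N b] and C = trunc_conv0[of N c]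
  have AB: "conv0 (\<lambda>z. ev (trunc N a) z * ev (trunc N b) z) \<and>
      taylor (\<lambda>z. ev (trunc N a) z * ev (trunc N b) z) = fmult (trunc N a) (trunc N b)"
    using F_mult[OF A[THEN conjunct1] B[THEN conjunct1]] A B by simp
  have BC: "conv0 (\<lambda>z. ev (trunc N b) z * ev (trunc N c) z) \<and>
      taylor (\<lambda>z. ev (trunc N b) z * ev (trunc N c) z) = fmult (trunc N b) (trunc N c)"
    using F_mult[OF B[THEN conjunct1] C[THEN conjunct1]] B C by simp
  have "taylor (\<lambda>z. (ev (trunc N a) z * ev (trunc N b) z) * ev (trunc N c) z) =
        fmult (fmult (trunc N a) (trunc N b)) (trunc N c)"
    using F_mult[OF AB[THEN conjunct1] C[THEN conjunct1]] AB C by simp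
  moreover have "taylor (\<lambda>z. ev (trunc N a) z * (ev (trunc N b) z * ev (trunc N c) z)) =
        fmult (trunc N a) (fmult (trunc N b) (trunc N c))"
    using F_mult[OF A[THEN conjunct1] BC[THEN conjunct1]] A BC by simp
  ultimately show ?thesis by (simp add: mult.assoc)
qed

lemma ASSOC: "fmult (fmult a b) c = fmult a (fmult b c)"
proof
  fix x :: "nat \<times> nat"
  obtain m n where x: "x = (m,n)" by force
  define N where "N = m + n"
  have N: "m + n \<le> N" by (simp add: N_def)
  have "fmult (fmult a b) c (m,n) = fmult (trunc N (fmult a b)) (trunc N c) (m,n)" by (rule LOC_MULT[OF N])
  also have "\<dots> = fmult (trunc N (fmult (trunc N a) (trunc N b))) (trunc N (trunc N c)) (m,n)"
    by (simp add: trunc_fmult[of N a b] trunc_trunc)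
  also have "\<dots> = fmult (fmult (trunc N a) (trunc N b)) (trunc N c) (m,n)" by (rule LOC_MULT[OF N, symmetric])
  also have "\<dots> = fmult (trunc N a) (fmult (trunc N b) (trunc N c)) (m,n)" by (simp add: fmult_fin_assoc)
  also have "\<dots> = fmult (trunc N (trunc N a)) (trunc N (fmult (trunc N b) (trunc N c))) (m,n)"
    by (rule LOC_MULT[OF N])
  also have "\<dots> = fmult (trunc N a) (trunc N (fmult b c)) (m,n)"
    by (simp add: trunc_fmult[of N b c] trunc_trunc)
  also have "\<dots> = fmult a (fmult b c) (m,n)" by (rule LOC_MULT[OF N, of a "fmult b c", symmetric])
  finally show "fmult (fmult a b) c x = fmult a (fmult b c) x" by (simp add: x)
qed

lemma FSWAP_MULT: "fswap (fmult a b) = fmult (fswap a) (fswap b)"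
proof
  fix x :: "nat \<times> nat"
  obtain m n where x: "x = (m,n)" by force
  show "fswap (fmult a b) x = fmult (fswap a) (fswap b) x"
    unfolding x fswap_def fmult_def prod.case by (rule sum.swap)
qed

lemma fswap_fswap: "fswap (fswap a) = a" by (auto simp: fswap_def)

lemma FCOMP_MULT:
  assumes P: "conv0 P" and Q: "conv0 Q" and P0: "P 0 = 0" and Q0: "Q 0 = 0"
  shows "fcomp (fmult u v) (taylor P) (taylor Q) = fmult (fcomp u (taylor P) (taylor Q)) (fcomp v (taylor P) (taylor Q))"
proof
  fix x :: "nat \<times> nat"
  obtain m n where x: "x = (m,n)" by force
  define N where "N = m + n"
  have N: "m + n \<le> N" by (simp add: N_def)
  define T where "T = (\<lambda>a. fcomp a (taylor P) (taylor Q))"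
  note U = trunc_conv0[of N u] and V = trunc_conv0[of N v]
  have UV: "conv0 (\<lambda>z. ev (trunc N u) z * ev (trunc N v) z) \<and>
      taylor (\<lambda>z. ev (trunc N u) z * ev (trunc N v) z) = fmult (trunc N u) (trunc N v)"
    using F_mult[OF U[THEN conjunct1] V[THEN conjunct1]] U V by simp
  have c1: "T (fmult (trunc N u) (trunc N v)) =
      taylor (\<lambda>z. ev (trunc N u) (P z, Q z) * ev (trunc N v) (P z, Q z))"
    using F_comp[OF UV[THEN conjunct1] P Q P0 Q0] UV by (simp add: T_def)
  have cu: "conv0 (\<lambda>z. ev (trunc N u) (P z, Q z)) \<and> taylor (\<lambda>z. ev (trunc N u) (P z, Q z)) = T (trunc N u)"
    using F_comp[OF U[THEN conjunct1] P Q P0 Q0] U by (simp add: T_def)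
  have cv: "conv0 (\<lambda>z. ev (trunc N v) (P z, Q z)) \<and> taylor (\<lambda>z. ev (trunc N v) (P z, Q z)) = T (trunc N v)"
    using F_comp[OF V[THEN conjunct1] P Q P0 Q0] V by (simp add: T_def)
  have fin: "T (fmult (trunc N u) (trunc N v)) = fmult (T (trunc N u)) (T (trunc N v))"
    unfolding c1 using F_mult[OF cu[THEN conjunct1] cv[THEN conjunct1]] cu cv by simp
  have "T (fmult u v) (m,n) = T (trunc N (fmult u v)) (m,n)" unfolding T_def by (rule LOC_COMP[OF N])
  also have "\<dots> = T (trunc N (fmult (trunc N u) (trunc N v))) (m,n)" by (simp add: trunc_fmult[of N u v])
  also have "\<dots> = T (fmult (trunc N u) (trunc N v)) (m,n)" unfolding T_def by (rule LOC_COMP[OF N, symmetric])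
  also have "\<dots> = fmult (T (trunc N u)) (T (trunc N v)) (m,n)" by (simp add: fin)
  also have "\<dots> = fmult (trunc N (T (trunc N u))) (trunc N (T (trunc N v))) (m,n)" by (rule LOC_MULT[OF N])
  also have "\<dots> = fmult (trunc N (T u)) (trunc N (T v)) (m,n)"
    by (simp add: T_def trunc_fcomp[of N u] trunc_fcomp[of N v])
  also have "\<dots> = fmult (T u) (T v) (m,n)" by (rule LOC_MULT[OF N, symmetric])
  finally show "fcomp (fmult u v) (taylor P) (taylor Q) x = fmult (T u) (T v) x" by (simp add: x T_def)
qed

lemma FCOMP_INV:
  assumes P: "conv0 P" and Q: "conv0 Q" and P0: "P 0 = 0" and Q0: "Q 0 = 0"
    and P1: "conv0 P1" and Q1: "conv0 Q1" and P10: "P1 0 = 0" and Q10: "Q1 0 = 0"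
    and inv: "\<forall>\<^sub>F z in nhds 0. (P1 (P z, Q z), Q1 (P z, Q z)) = z"
  shows "fcomp (fcomp x (taylor P1) (taylor Q1)) (taylor P) (taylor Q) = x"
proof
  fix y :: "nat \<times> nat"
  obtain m n where y: "y = (m,n)" by force
  define N where "N = m + n"
  have N: "m + n \<le> N" by (simp add: N_def)
  define T where "T = (\<lambda>a. fcomp a (taylor P) (taylor Q))"
  define T1 where "T1 = (\<lambda>a. fcomp a (taylor P1) (taylor Q1))"
  note X = trunc_conv0[of N x]
  define h where "h = ev (trunc N x)"
  have h: "conv0 h" "taylor h = trunc N x" using X by (simp_all add: h_def)
  have h1: "conv0 (\<lambda>w. h (P1 w, Q1 w)) \<and> taylor (\<lambda>w. h (P1 w, Q1 w)) = T1 (trunc N x)"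
    using F_comp[OF h(1) P1 Q1 P10 Q10] h by (simp add: T1_def)
  have h2: "conv0 (\<lambda>z. h (P1 (P z, Q z), Q1 (P z, Q z))) \<and>
      taylor (\<lambda>z. h (P1 (P z, Q z), Q1 (P z, Q z))) = T (T1 (trunc N x))"
    using F_comp[OF h1[THEN conjunct1] P Q P0 Q0] h1 by (simp add: T_def)
  have "\<forall>\<^sub>F z in nhds 0. h (P1 (P z, Q z), Q1 (P z, Q z)) = h z"
    using inv by (rule eventually_mono) simp
  then have fin: "T (T1 (trunc N x)) = trunc N x"
    using taylor_eq[OF h2[THEN conjunct1] h(1)] h2 h(2) by simp
  have "T (T1 x) (m,n) = T (trunc N (T1 x)) (m,n)" unfolding T_def by (rule LOC_COMP[OF N])
  also have "\<dots> = T (trunc N (T1 (trunc N x))) (m,n)" by (simp add: T1_def trunc_fcomp[of N x])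
  also have "\<dots> = T (T1 (trunc N x)) (m,n)" unfolding T_def by (rule LOC_COMP[OF N, symmetric])
  also have "\<dots> = x (m,n)" using fin N by (simp add: trunc_def)
  finally show "fcomp (fcomp x (taylor P1) (taylor Q1)) (taylor P) (taylor Q) y = x y"
    by (simp add: y T_def T1_def)
qed

lemma c1: "conv0 (\<lambda>z. k)" using F_const by blast
lemma cfst: "conv0 fst" using F_fst by blast
lemma csnd: "conv0 snd" using F_snd by blast
lemma cadd: "conv0 a \<Longrightarrow> conv0 b \<Longrightarrow> conv0 (\<lambda>z. a z + b z)" using F_add by blast
lemma cdiff: "conv0 a \<Longrightarrow> conv0 b \<Longrightarrow> conv0 (\<lambda>z. a z - b z)" using F_diff by blast
lemma cmult: "conv0 a \<Longrightarrow> conv0 b \<Longrightarrow> conv0 (\<lambda>z. a z * b z)" using F_mult by blast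
lemma ccomp: "conv0 a \<Longrightarrow> conv0 (\<lambda>z. fst (\<Phi> z)) \<Longrightarrow> conv0 (\<lambda>z. snd (\<Phi> z)) \<Longrightarrow> \<Phi> 0 = 0 \<Longrightarrow>
   conv0 (\<lambda>z. a (\<Phi> z))"
  using F_comp[of a "\<lambda>z. fst (\<Phi> z)" "\<lambda>z. snd (\<Phi> z)"] by (simp add: zero_prod_def)

lemma KEYL:
  fixes \<psi> :: "complex \<times> complex \<Rightarrow> complex \<times> complex"
  assumes f: "conv0 f" and g: "conv0 g"
    and hf: "\<forall>\<^sub>F z in nhds 0. fst (\<psi> z) = fst z * (1 + f z)"
    and hg: "\<forall>\<^sub>F z in nhds 0. snd (\<psi> z) = snd z * (1 + g z)"
    and gf: "\<forall>\<^sub>F z in nhds 0. g z = - f z * (1 + g z)"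
    and a: "conv0 a"
  shows "\<exists>K. conv0 K \<and> (\<forall>\<^sub>F z in nhds 0. a (\<psi> z) - a z = f z * K z)"
proof -
  have U: "conv0 (\<lambda>z. fst z * f z)" by (rule cmult[OF cfst f])
  have V: "conv0 (\<lambda>z. snd z * g z)" by (rule cmult[OF csnd g])
  obtain K1 K2 where K: "conv0 K1" "conv0 K2"
    "\<forall>\<^sub>F z in nhds 0. a (fst z + fst z * f z, snd z + snd z * g z) - a z = fst z * f z * K1 z + snd z * g z * K2 z"
    using F_diff2[OF a U V] by (auto simp: zero_prod_def)
  define K where "K = (\<lambda>z. fst z * K1 z - snd z * (1 + g z) * K2 z)"
  have Kc: "conv0 K" unfolding K_def
    by (intro cdiff cmult cfst csnd K cadd c1 g)
  have "\<forall>\<^sub>F z in nhds 0. a (\<psi> z) - a z = f z * K z"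
    using K(3) hf hg gf
  proof eventually_elim
    case (elim z)
    have "\<psi> z = (fst z + fst z * f z, snd z + snd z * g z)"
      using elim(2,3) by (metis distrib_left mult.right_neutral prod.collapse)
    have e2: "snd z * g z * K2 z = snd z * (- f z * (1 + g z)) * K2 z"
      by (rule arg_cong[of _ _ "\<lambda>x. snd z * x * K2 z"]) (rule elim(4))
    have "a (\<psi> z) - a z = fst z * f z * K1 z + snd z * g z * K2 z" using elim(1) \<open>\<psi> z = _\<close> by simp
    also have "\<dots> = f z * K z" unfolding e2 K_def by (simp add: algebra_simps)
    finally show ?case .
  qed
  then show ?thesis using Kc by blast
qed

lemma F2L:
  fixes \<psi> :: "complex \<times> complex \<Rightarrow> complex \<times> complex"
  assumes f: "conv0 f" and g: "conv0 g"
    and hf: "\<forall>\<^sub>F z in nhds 0. fst (\<psi> z) = fst z * (1 + f z)"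
    and hg: "\<forall>\<^sub>F z in nhds 0. snd (\<psi> z) = snd z * (1 + g z)"
    and fg: "\<forall>\<^sub>F z in nhds 0. (1 + f z) * (1 + g z) = 1"
    and gf: "\<forall>\<^sub>F z in nhds 0. g z = - f z * (1 + g z)"
    and p1: "conv0 (\<lambda>z. fst (\<psi> z))" and p2: "conv0 (\<lambda>z. snd (\<psi> z))" and p0: "\<psi> 0 = 0"
    and inv: "\<forall>\<^sub>F z in nhds 0. sigma (\<psi> (sigma (\<psi> z))) = z"
  shows "\<exists>v. conv0 v \<and> (\<forall>\<^sub>F z in nhds 0. f (snd z, fst z) = v z * f z)"
proof -
  define w where "w = (\<lambda>z. f (snd z, fst z))"
  have wc: "conv0 w" unfolding w_def by (rule conv0_sw[OF f])
  have wpc: "conv0 (\<lambda>z. w (\<psi> z))" by (rule ccomp[OF wc p1 p2 p0])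
  have s1: "conv0 (\<lambda>z. fst (sigma (\<psi> z)))" using p2 by (simp add: sigma_def)
  have s2: "conv0 (\<lambda>z. snd (sigma (\<psi> z)))" using p1 by (simp add: sigma_def)
  have s0: "sigma (\<psi> 0) = 0" using p0 by (simp add: sigma_def zero_prod_def)
  have hf2: "\<forall>\<^sub>F z in nhds 0. fst (\<psi> (sigma (\<psi> z))) = fst (sigma (\<psi> z)) * (1 + f (sigma (\<psi> z)))"
    by (rule EV_TRANS[where \<phi>="\<lambda>z. sigma (\<psi> z)", OF hf s1 s2 s0])
  have "\<forall>\<^sub>F z in nhds 0. snd z * ((1 + g z) * (1 + w (\<psi> z))) = snd z * 1"
    using hf2 inv hg
  proof eventually_elim
    case (elim z)
    have "snd z = fst (\<psi> (sigma (\<psi> z)))" using elim(2) by (metis sigma_def snd_conv)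
    also have "\<dots> = snd (\<psi> z) * (1 + w (\<psi> z))" using elim(1) by (simp add: sigma_def w_def)
    finally show ?case using elim(3) by (simp add: mult_ac)
  qed
  then have "\<forall>\<^sub>F z in nhds 0. (1 + g z) * (1 + w (\<psi> z)) = 1"
    by (rule F_cancelY[OF cmult[OF cadd[OF c1 g] cadd[OF c1 wpc]] c1])
  then have wf: "\<forall>\<^sub>F z in nhds 0. w (\<psi> z) = f z"
    using fg
  proof eventually_elim
    case (elim z)
    have "1 + w (\<psi> z) = (1 + f z) * ((1 + g z) * (1 + w (\<psi> z)))" using elim(2) by (simp add: mult.assoc[symmetric])
    then show ?case using elim(1) by simp
  qed
  obtain K where K: "conv0 K" "\<forall>\<^sub>F z in nhds 0. w (\<psi> z) - w z = f z * K z"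
    using KEYL[OF f g hf hg gf wc] by blast
  have "\<forall>\<^sub>F z in nhds 0. f (snd z, fst z) = (1 - K z) * f z"
    using K(2) wf
  proof eventually_elim
    case (elim z)
    then show ?case unfolding w_def by (simp add: algebra_simps)
  qed
  then show ?thesis using cdiff[OF c1 K(1)] by blast
qed

lemma NZ:
  fixes h w :: "complex \<times> complex \<Rightarrow> complex" and p :: "real \<Rightarrow> complex \<times> complex"
  assumes A: "conv0 A" and c: "c \<noteq> 0"
    and E1: "\<forall>\<^sub>F z in nhds 0. h z = w z * A z"
    and E2: "\<forall>\<^sub>F z in nhds 0. norm (h z - c * w z) \<le> norm c / 4 * norm z"
    and P: "\<And>t. t > 0 \<Longrightarrow> inpd t (p t) \<and> norm (w (p t)) = t \<and> norm (p t) \<le> t"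
  shows "A 0 \<noteq> 0"
proof
  assume A0: "A 0 = 0"
  have "norm c / 4 > 0" using c by simp
  then have E3: "\<forall>\<^sub>F z in nhds 0. norm (A z - A 0) \<le> norm c / 4" by (rule F_cont[OF A])
  have "\<forall>\<^sub>F z in nhds 0. h z = w z * A z \<and> norm (h z - c * w z) \<le> norm c / 4 * norm z \<and> norm (A z) \<le> norm c / 4"
    using E1 E2 E3 by eventually_elim (use A0 in auto)
  then obtain e where e: "e > 0" "\<And>z. inpd e z \<Longrightarrow> h z = w z * A z \<and> norm (h z - c * w z) \<le> norm c / 4 * norm z \<and> norm (A z) \<le> norm c / 4"
    using nhds_inpdE by blast
  define z where "z = p e"
  have pz: "inpd e z" "norm (w z) = e" "norm z \<le> e" using P[OF e(1)] by (auto simp: z_def)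
  have ez1: "h z = w z * A z" and ez2: "norm (h z - c * w z) \<le> norm c / 4 * norm z"
    and ez3: "norm (A z) \<le> norm c / 4" using e(2)[OF pz(1)] by auto
  have nh: "norm (h z) = norm (w z) * norm (A z)" using ez1 by (simp add: norm_mult)
  have "norm (c * w z) = norm (h z - (h z - c * w z))" by simp
  also have "\<dots> \<le> norm (h z) + norm (h z - c * w z)" by (rule norm_triangle_ineq4)
  also have "\<dots> \<le> norm (w z) * norm (A z) + norm c / 4 * norm z" unfolding nh using ez2 by simp
  also have "\<dots> \<le> e * (norm c / 4) + norm c / 4 * e"
    using ez3 pz c by (intro add_mono mult_mono mult_left_mono) auto
  finally have "norm c * e \<le> norm c * e / 2" using pz by (simp add: norm_mult)
  moreover have "norm c * e > 0" using c e(1) by simp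
  ultimately show False by linarith
qed

lemma fstL: "norm (fst x - fst y) \<le> norm (x - y)"
proof -
  have "(fst x - fst y, snd x - snd y) = x - y" by (simp add: prod_eq_iff)
  then show ?thesis using norm_fst_le[of "fst x - fst y" "snd x - snd y"] by simp
qed
lemma sndL: "norm (snd x - snd y) \<le> norm (x - y)"
proof -
  have "(fst x - fst y, snd x - snd y) = x - y" by (simp add: prod_eq_iff)
  then show ?thesis using norm_snd_le[of "snd x - snd y" "fst x - fst y"] by simp
qed
lemma norm0a: "norm ((0::complex), b) = norm b" by (simp add: norm_Pair)
lemma norm0b: "norm (b, (0::complex)) = norm b" by (simp add: norm_Pair)

lemma F3D:
  fixes \<phi> \<psi> :: "complex \<times> complex \<Rightarrow> complex \<times> complex"
  assumes f: "conv0 f" and g: "conv0 g"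
    and hf: "\<forall>\<^sub>F z in nhds 0. fst (\<psi> z) = fst z * (1 + f z)"
    and hg: "\<forall>\<^sub>F z in nhds 0. snd (\<psi> z) = snd z * (1 + g z)"
    and gf: "\<forall>\<^sub>F z in nhds 0. g z = - f z * (1 + g z)"
    and ph1: "conv0 (\<lambda>z. fst (\<phi> z))" and ph2: "conv0 (\<lambda>z. snd (\<phi> z))" and ph0: "\<phi> 0 = 0"
    and p1: "conv0 (\<lambda>z. fst (\<psi> z))" and p2: "conv0 (\<lambda>z. snd (\<psi> z))" and p0: "\<psi> 0 = 0"
    and comm: "\<And>z. \<psi> (\<phi> z) = \<phi> (\<psi> z)"
    and hinv: "\<forall>\<^sub>F z in nhds 0. hprod (\<phi> z) = hprod z"
    and l: "l \<noteq> 0" and der: "(\<phi> has_derivative (\<lambda>\<xi>. (l * fst \<xi>, snd \<xi> / l))) (at 0)"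
  shows "\<exists>v. conv0 v \<and> (\<forall>\<^sub>F z in nhds 0. f (\<phi> z) = v z * f z)"
proof -
  define L where "L = (\<lambda>\<xi>::complex \<times> complex. (l * fst \<xi>, snd \<xi> / l))"
  have E: "\<forall>\<^sub>F z in nhds 0. norm (\<phi> z - L z) \<le> norm l / 4 * norm z"
    unfolding L_def by (rule DERIV_EV[OF der ph0]) (use l in simp)
  have E': "\<forall>\<^sub>F z in nhds 0. norm (\<phi> z - L z) \<le> norm (1 / l) / 2 * norm z"
    unfolding L_def by (rule DERIV_EV[OF der ph0]) (use l in simp)
  have axis: "\<forall>\<^sub>F z in nhds 0. fst z = 0 \<longrightarrow> fst (\<phi> z) = 0"
    using hinv E'
  proof eventually_elim
    case (elim z)
    show ?case
    proof
      assume z1: "fst z = 0"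
      have prod0: "fst (\<phi> z) * snd (\<phi> z) = 0" using elim(1) z1 by (simp add: hprod_def)
      show "fst (\<phi> z) = 0"
      proof (cases "snd z = 0")
        case True
        then have "z = 0" using z1 by (simp add: prod_eq_iff)
        then show ?thesis using ph0 by simp
      next
        case False
        have nz: "norm z = norm (snd z)" using z1 norm0a[of "snd z"] by (metis prod.collapse)
        have "norm (snd (\<phi> z) - snd z / l) \<le> norm (\<phi> z - L z)" using sndL[of "\<phi> z" "L z"] by (simp add: L_def)
        also have "\<dots> \<le> norm (1 / l) / 2 * norm (snd z)" using elim(2) nz by simp
        finally have a: "norm (snd (\<phi> z) - snd z / l) \<le> norm (snd z / l) / 2"
          by (simp add: norm_divide)
        have "norm (snd z / l) > 0" using False l by simp
        then have "snd (\<phi> z) \<noteq> 0" using a by auto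
        then show ?thesis using prod0 by simp
      qed
    qed
  qed
  obtain A where A: "conv0 A" "\<forall>\<^sub>F z in nhds 0. fst (\<phi> z) = fst z * A z"
    using F_divX[OF ph1 axis] by blast
  have A0: "A 0 \<noteq> 0"
  proof (rule NZ[OF A(1) l A(2), where p="\<lambda>t. (of_real t, 0)"])
    show "\<forall>\<^sub>F z in nhds 0. norm (fst (\<phi> z) - l * fst z) \<le> norm l / 4 * norm z"
      using E
    proof eventually_elim
      case (elim z)
      have "norm (fst (\<phi> z) - l * fst z) \<le> norm (\<phi> z - L z)" using fstL[of "\<phi> z" "L z"] by (simp add: L_def)
      then show ?case using elim by linarith
    qed
    fix t :: real assume "t > 0"
    then show "inpd t (complex_of_real t, 0) \<and> norm (fst (complex_of_real t, 0::complex)) = t \<and>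
        norm (complex_of_real t, 0::complex) \<le> t"
      by (simp add: inpd_def norm0b)
  qed
  obtain Ai where Ai: "conv0 Ai" "\<forall>\<^sub>F z in nhds 0. A z * Ai z = 1" using F_inv[OF A(1) A0] by blast
  obtain K where K: "conv0 K" "\<forall>\<^sub>F z in nhds 0. A (\<psi> z) - A z = f z * K z"
    using KEYL[OF f g hf hg gf A(1)] by blast
  have fph: "conv0 (\<lambda>z. f (\<phi> z))" by (rule ccomp[OF f ph1 ph2 ph0])
  have Aps: "conv0 (\<lambda>z. A (\<psi> z))" by (rule ccomp[OF A(1) p1 p2 p0])
  have tr1: "\<forall>\<^sub>F z in nhds 0. fst (\<psi> (\<phi> z)) = fst (\<phi> z) * (1 + f (\<phi> z))"
    by (rule EV_TRANS[where \<phi>=\<phi>, OF hf ph1 ph2 ph0])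
  have tr2: "\<forall>\<^sub>F z in nhds 0. fst (\<phi> (\<psi> z)) = fst (\<psi> z) * A (\<psi> z)"
    by (rule EV_TRANS[where \<phi>=\<psi>, OF A(2) p1 p2 p0])
  have "\<forall>\<^sub>F z in nhds 0. fst z * (A z * (1 + f (\<phi> z))) = fst z * ((1 + f z) * A (\<psi> z))"
    using tr1 tr2 A(2) hf
  proof eventually_elim
    case (elim z)
    have "fst z * (A z * (1 + f (\<phi> z))) = fst (\<psi> (\<phi> z))" using elim(1,3) by simp
    also have "\<dots> = fst (\<phi> (\<psi> z))" by (simp add: comm)
    also have "\<dots> = fst z * ((1 + f z) * A (\<psi> z))" using elim(2,4) by simp
    finally show ?case .
  qed
  then have can: "\<forall>\<^sub>F z in nhds 0. A z * (1 + f (\<phi> z)) = (1 + f z) * A (\<psi> z)"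
    by (rule F_cancelX[OF cmult[OF A(1) cadd[OF c1 fph]] cmult[OF cadd[OF c1 f] Aps]])
  have "\<forall>\<^sub>F z in nhds 0. f (\<phi> z) = (Ai z * (A z + K z + f z * K z)) * f z"
    using can K(2) Ai(2)
  proof eventually_elim
    case (elim z)
    have aps: "A (\<psi> z) = A z + f z * K z" using elim(2) by (simp add: algebra_simps)
    have "A z * f (\<phi> z) = (1 + f z) * (A z + f z * K z) - A z"
      using elim(1) unfolding aps by (simp add: algebra_simps)
    also have "\<dots> = f z * (A z + K z + f z * K z)" by (simp add: algebra_simps)
    finally have a: "A z * f (\<phi> z) = f z * (A z + K z + f z * K z)" .
    have "f (\<phi> z) = Ai z * (A z * f (\<phi> z))" using elim(3) by (simp add: mult.assoc[symmetric] mult.commute[of "Ai z"])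
    also have "\<dots> = (Ai z * (A z + K z + f z * K z)) * f z" unfolding a by (simp add: mult_ac)
    finally show ?case .
  qed
  then show ?thesis using cmult[OF Ai(1) cadd[OF cadd[OF A(1) K(1)] cmult[OF f K(1)]]] by blast
qed

lemma F3S:
  fixes \<phi> \<psi> :: "complex \<times> complex \<Rightarrow> complex \<times> complex"
  assumes f: "conv0 f" and g: "conv0 g"
    and hf: "\<forall>\<^sub>F z in nhds 0. fst (\<psi> z) = fst z * (1 + f z)"
    and hg: "\<forall>\<^sub>F z in nhds 0. snd (\<psi> z) = snd z * (1 + g z)"
    and gf: "\<forall>\<^sub>F z in nhds 0. g z = - f z * (1 + g z)"
    and ph1: "conv0 (\<lambda>z. fst (\<phi> z))" and ph2: "conv0 (\<lambda>z. snd (\<phi> z))" and ph0: "\<phi> 0 = 0"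
    and p1: "conv0 (\<lambda>z. fst (\<psi> z))" and p2: "conv0 (\<lambda>z. snd (\<psi> z))" and p0: "\<psi> 0 = 0"
    and comm: "\<And>z. \<psi> (\<phi> z) = \<phi> (\<psi> z)"
    and hinv: "\<forall>\<^sub>F z in nhds 0. hprod (\<phi> z) = hprod z"
    and der: "(\<phi> has_derivative (\<lambda>\<xi>. - sigma \<xi>)) (at 0)"
  shows "\<exists>v. conv0 v \<and> (\<forall>\<^sub>F z in nhds 0. f (\<phi> z) = v z * f z)"
proof -
  define L where "L = (\<lambda>\<xi>::complex \<times> complex. - sigma \<xi>)"
  have Lf: "fst (L z) = - snd z" "snd (L z) = - fst z" for z by (simp_all add: L_def sigma_def)
  have E: "\<forall>\<^sub>F z in nhds 0. norm (\<phi> z - L z) \<le> norm (-1::complex) / 4 * norm z"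
    unfolding L_def by (rule DERIV_EV[OF der ph0]) simp
  have E': "\<forall>\<^sub>F z in nhds 0. norm (\<phi> z - L z) \<le> 1 / 2 * norm z"
    unfolding L_def by (rule DERIV_EV[OF der ph0]) simp
  have axis: "\<forall>\<^sub>F z in nhds 0. snd z = 0 \<longrightarrow> fst (\<phi> z) = 0"
    using hinv E'
  proof eventually_elim
    case (elim z)
    show ?case
    proof
      assume z2: "snd z = 0"
      have prod0: "fst (\<phi> z) * snd (\<phi> z) = 0" using elim(1) z2 by (simp add: hprod_def)
      show "fst (\<phi> z) = 0"
      proof (cases "fst z = 0")
        case True
        then have "z = 0" using z2 by (simp add: prod_eq_iff)
        then show ?thesis using ph0 by simp
      next
        case False
        have nz: "norm z = norm (fst z)" using z2 norm0b[of "fst z"] by (metis prod.collapse)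
        have "norm (snd (\<phi> z) + fst z) \<le> norm (\<phi> z - L z)" using sndL[of "\<phi> z" "L z"] by (simp add: Lf)
        also have "\<dots> \<le> 1 / 2 * norm (fst z)" using elim(2) nz by simp
        finally have a: "norm (snd (\<phi> z) + fst z) \<le> norm (fst z) / 2" by simp
        have "norm (fst z) > 0" using False by simp
        then have "snd (\<phi> z) \<noteq> 0" using a by auto
        then show ?thesis using prod0 by simp
      qed
    qed
  qed
  obtain A where A: "conv0 A" "\<forall>\<^sub>F z in nhds 0. fst (\<phi> z) = snd z * A z"
    using F_divY[OF ph1 axis] by blast
  have A0: "A 0 \<noteq> 0"
  proof (rule NZ[OF A(1) _ A(2), where c="-1" and p="\<lambda>t. (0, of_real t)"])
    show "\<forall>\<^sub>F z in nhds 0. norm (fst (\<phi> z) - (-1) * snd z) \<le> norm (-1::complex) / 4 * norm z"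
      using E
    proof eventually_elim
      case (elim z)
      have "norm (fst (\<phi> z) - (-1) * snd z) \<le> norm (\<phi> z - L z)" using fstL[of "\<phi> z" "L z"] by (simp add: Lf)
      then show ?case using elim by linarith
    qed
    fix t :: real assume "t > 0"
    then show "inpd t (0, complex_of_real t) \<and> norm (snd (0::complex, complex_of_real t)) = t \<and>
        norm (0::complex, complex_of_real t) \<le> t"
      by (simp add: inpd_def norm0a)
  qed simp
  obtain Ai where Ai: "conv0 Ai" "\<forall>\<^sub>F z in nhds 0. A z * Ai z = 1" using F_inv[OF A(1) A0] by blast
  obtain K where K: "conv0 K" "\<forall>\<^sub>F z in nhds 0. A (\<psi> z) - A z = f z * K z"
    using KEYL[OF f g hf hg gf A(1)] by blast
  have fph: "conv0 (\<lambda>z. f (\<phi> z))" by (rule ccomp[OF f ph1 ph2 ph0])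
  have Aps: "conv0 (\<lambda>z. A (\<psi> z))" by (rule ccomp[OF A(1) p1 p2 p0])
  have tr1: "\<forall>\<^sub>F z in nhds 0. fst (\<psi> (\<phi> z)) = fst (\<phi> z) * (1 + f (\<phi> z))"
    by (rule EV_TRANS[where \<phi>=\<phi>, OF hf ph1 ph2 ph0])
  have tr2: "\<forall>\<^sub>F z in nhds 0. fst (\<phi> (\<psi> z)) = snd (\<psi> z) * A (\<psi> z)"
    by (rule EV_TRANS[where \<phi>=\<psi>, OF A(2) p1 p2 p0])
  have "\<forall>\<^sub>F z in nhds 0. snd z * (A z * (1 + f (\<phi> z))) = snd z * ((1 + g z) * A (\<psi> z))"
    using tr1 tr2 A(2) hg
  proof eventually_elim
    case (elim z)
    have "snd z * (A z * (1 + f (\<phi> z))) = fst (\<psi> (\<phi> z))" using elim(1,3) by simp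
    also have "\<dots> = fst (\<phi> (\<psi> z))" by (simp add: comm)
    also have "\<dots> = snd z * ((1 + g z) * A (\<psi> z))" using elim(2,4) by simp
    finally show ?case .
  qed
  then have can: "\<forall>\<^sub>F z in nhds 0. A z * (1 + f (\<phi> z)) = (1 + g z) * A (\<psi> z)"
    by (rule F_cancelY[OF cmult[OF A(1) cadd[OF c1 fph]] cmult[OF cadd[OF c1 g] Aps]])
  have "\<forall>\<^sub>F z in nhds 0. f (\<phi> z) = (Ai z * ((1 + g z) * (K z - A z))) * f z"
    using can K(2) Ai(2) gf
  proof eventually_elim
    case (elim z)
    have aps: "A (\<psi> z) = A z + f z * K z" using elim(2) by (simp add: algebra_simps)
    have ga: "g z * A z = - f z * (1 + g z) * A z"
      by (rule arg_cong[of _ _ "\<lambda>x. x * A z"]) (rule elim(4))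
    have "A z * f (\<phi> z) = (1 + g z) * (A z + f z * K z) - A z"
      using elim(1) unfolding aps by (simp add: algebra_simps)
    also have "\<dots> = g z * A z + (1 + g z) * f z * K z" by (simp add: algebra_simps)
    also have "\<dots> = f z * ((1 + g z) * (K z - A z))" unfolding ga by (simp add: algebra_simps)
    finally have a: "A z * f (\<phi> z) = f z * ((1 + g z) * (K z - A z))" .
    have "f (\<phi> z) = Ai z * (A z * f (\<phi> z))" using elim(3) by (simp add: mult.assoc[symmetric] mult.commute[of "Ai z"])
    also have "\<dots> = (Ai z * ((1 + g z) * (K z - A z))) * f z" unfolding a by (simp add: mult_ac)
    finally show ?case .
  qed
  then show ?thesis using cmult[OF Ai(1) cmult[OF cadd[OF c1 g] cdiff[OF K(1) A(1)]]] by blast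
qed

lemma sigma_apply: "(a \<circ> sigma) = (\<lambda>z. a (snd z, fst z))" by (auto simp: sigma_def o_def)

lemma CONCL:
  fixes \<phi> :: "complex \<times> complex \<Rightarrow> complex \<times> complex"
  assumes hol: "conv0 (fst \<circ> \<phi>)" "conv0 (snd \<circ> \<phi>)" and fix0: "\<phi> 0 = 0"
    and rev1: "\<forall>\<^sub>F \<xi> in nhds 0. sigma (\<phi> (sigma (\<phi> \<xi>))) = \<xi>"
    and f: "conv0 f"
    and vs: "conv0 vs" and Es: "\<forall>\<^sub>F z in nhds 0. f (snd z, fst z) = vs z * f z"
    and vp: "conv0 vp" and Ep: "\<forall>\<^sub>F z in nhds 0. f (\<phi> z) = vp z * f z"
  shows "(\<lambda>a. a \<circ> sigma) ` conv_ideal f = conv_ideal f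
          \<and> germ_set_eq ((\<lambda>a. a \<circ> \<phi>) ` conv_ideal f) (conv_ideal f)
          \<and> fswap ` formal_ideal (taylor f) = formal_ideal (taylor f)
          \<and> (\<lambda>a. fcomp a (taylor (fst \<circ> \<phi>)) (taylor (snd \<circ> \<phi>))) ` formal_ideal (taylor f)
              = formal_ideal (taylor f)"
proof -
  have ph1: "conv0 (\<lambda>z. fst (\<phi> z))" using hol(1) by (simp add: o_def)
  have ph2: "conv0 (\<lambda>z. snd (\<phi> z))" using hol(2) by (simp add: o_def)
  have CLs: "a \<circ> sigma \<in> conv_ideal f" if a: "a \<in> conv_ideal f" for a
  proof -
    obtain u where u: "conv0 u" "\<forall>\<^sub>F z in nhds 0. a z = u z * f z" and ac: "conv0 a"
      using a by (auto simp: conv_ideal_def)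
    have "\<forall>\<^sub>F z in nhds 0. a (snd z, fst z) = u (snd z, fst z) * f (snd z, fst z)"
      by (rule EV_SWAP[OF u(2)])
    then have "\<forall>\<^sub>F z in nhds 0. a (snd z, fst z) = (u (snd z, fst z) * vs z) * f z"
      using Es by eventually_elim (simp add: mult.assoc)
    then show ?thesis unfolding sigma_apply conv_ideal_def
      using conv0_sw[OF ac] cmult[OF conv0_sw[OF u(1)] vs] by blast
  qed
  have CLp: "a \<circ> \<phi> \<in> conv_ideal f" if a: "a \<in> conv_ideal f" for a
  proof -
    obtain u where u: "conv0 u" "\<forall>\<^sub>F z in nhds 0. a z = u z * f z" and ac: "conv0 a"
      using a by (auto simp: conv_ideal_def)
    have "\<forall>\<^sub>F z in nhds 0. a (\<phi> z) = u (\<phi> z) * f (\<phi> z)"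
      by (rule EV_TRANS[where \<phi>=\<phi>, OF u(2) ph1 ph2 fix0])
    then have "\<forall>\<^sub>F z in nhds 0. a (\<phi> z) = (u (\<phi> z) * vp z) * f z"
      using Ep by eventually_elim (simp add: mult.assoc)
    moreover have "a \<circ> \<phi> = (\<lambda>z. a (\<phi> z))" by (simp add: o_def)
    ultimately show ?thesis unfolding conv_ideal_def
      using ccomp[OF ac ph1 ph2 fix0] cmult[OF ccomp[OF u(1) ph1 ph2 fix0] vp] by auto
  qed
  have ss: "(a \<circ> sigma) \<circ> sigma = a" for a :: "complex \<times> complex \<Rightarrow> complex"
    by (auto simp: sigma_def o_def)
  have PA: "(\<lambda>a. a \<circ> sigma) ` conv_ideal f = conv_ideal f"
  proof
    show "(\<lambda>a. a \<circ> sigma) ` conv_ideal f \<subseteq> conv_ideal f" using CLs by blast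
    show "conv_ideal f \<subseteq> (\<lambda>a. a \<circ> sigma) ` conv_ideal f"
    proof
      fix a assume "a \<in> conv_ideal f"
      then have "a \<circ> sigma \<in> conv_ideal f" by (rule CLs)
      moreover have "a = (a \<circ> sigma) \<circ> sigma" by (simp add: ss)
      ultimately show "a \<in> (\<lambda>a. a \<circ> sigma) ` conv_ideal f" by blast
    qed
  qed
  have PB: "germ_set_eq ((\<lambda>a. a \<circ> \<phi>) ` conv_ideal f) (conv_ideal f)"
    unfolding germ_set_eq_def
  proof (intro conjI ballI)
    fix x assume "x \<in> (\<lambda>a. a \<circ> \<phi>) ` conv_ideal f"
    then obtain a where a: "a \<in> conv_ideal f" "x = a \<circ> \<phi>" by blast
    then have "x \<in> conv_ideal f" using CLp by simp
    moreover have "\<forall>\<^sub>F \<xi> in nhds 0. x \<xi> = x \<xi>" by simp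
    ultimately show "\<exists>b\<in>conv_ideal f. \<forall>\<^sub>F \<xi> in nhds 0. x \<xi> = b \<xi>" by blast
  next
    fix b assume b: "b \<in> conv_ideal f"
    define a where "a = ((b \<circ> sigma) \<circ> \<phi>) \<circ> sigma"
    have a: "a \<in> conv_ideal f" unfolding a_def by (intro CLs CLp b)
    have "\<forall>\<^sub>F \<xi> in nhds 0. (a \<circ> \<phi>) \<xi> = b \<xi>"
      using rev1 by eventually_elim (simp add: a_def)
    then show "\<exists>x\<in>(\<lambda>a. a \<circ> \<phi>) ` conv_ideal f. \<forall>\<^sub>F \<xi> in nhds 0. x \<xi> = b \<xi>" using a by blast
  qed
  define F where "F = taylor f"
  have FsF: "fswap F = fmult (taylor vs) F"
  proof -
    have "fswap F = taylor (\<lambda>z. f (snd z, fst z))" using F_swap[OF f] by (simp add: F_def)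
    also have "\<dots> = taylor (\<lambda>z. vs z * f z)" by (rule taylor_eq[OF conv0_sw[OF f] cmult[OF vs f] Es])
    also have "\<dots> = fmult (taylor vs) F" using F_mult[OF vs f] by (simp add: F_def)
    finally show ?thesis .
  qed
  have incS: "fswap (fmult u F) \<in> formal_ideal F" for u
  proof -
    have "fswap (fmult u F) = fmult (fmult (fswap u) (taylor vs)) F"
      by (simp add: FSWAP_MULT FsF ASSOC)
    then show ?thesis by (auto simp: formal_ideal_def)
  qed
  have PC: "fswap ` formal_ideal F = formal_ideal F"
  proof
    show "fswap ` formal_ideal F \<subseteq> formal_ideal F" using incS by (auto simp: formal_ideal_def)
    show "formal_ideal F \<subseteq> fswap ` formal_ideal F"
    proof
      fix x assume "x \<in> formal_ideal F"
      then obtain w where x: "x = fmult w F" by (auto simp: formal_ideal_def)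
      then have "fswap x \<in> formal_ideal F" using incS by simp
      moreover have "x = fswap (fswap x)" by (simp add: fswap_fswap)
      ultimately show "x \<in> fswap ` formal_ideal F" by blast
    qed
  qed
  define T where "T = (\<lambda>a. fcomp a (taylor (fst \<circ> \<phi>)) (taylor (snd \<circ> \<phi>)))"
  have P0: "(fst \<circ> \<phi>) 0 = 0" "(snd \<circ> \<phi>) 0 = 0" using fix0 by (simp_all add: zero_prod_def)
  have TF: "T F = fmult (taylor vp) F"
  proof -
    have "T F = taylor (\<lambda>z. f ((fst \<circ> \<phi>) z, (snd \<circ> \<phi>) z))"
      using F_comp[OF f hol P0] by (simp add: T_def F_def o_def)
    also have "\<dots> = taylor (\<lambda>z. f (\<phi> z))" by (simp add: o_def)
    also have "\<dots> = taylor (\<lambda>z. vp z * f z)" by (rule taylor_eq[OF ccomp[OF f ph1 ph2 fix0] cmult[OF vp f] Ep])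
    also have "\<dots> = fmult (taylor vp) F" using F_mult[OF vp f] by (simp add: F_def)
    finally show ?thesis .
  qed
  have incT: "T (fmult u F) \<in> formal_ideal F" for u
  proof -
    have "T (fmult u F) = fmult (T u) (T F)" unfolding T_def by (rule FCOMP_MULT[OF hol P0])
    also have "\<dots> = fmult (fmult (T u) (taylor vp)) F" by (simp add: TF ASSOC)
    finally show ?thesis by (auto simp: formal_ideal_def)
  qed
  define ch where "ch = (\<lambda>z. sigma (\<phi> (sigma z)))"
  define P1 where "P1 = (\<lambda>z. fst (ch z))"
  define Q1 where "Q1 = (\<lambda>z. snd (ch z))"
  have P1c: "conv0 P1" unfolding P1_def ch_def sigma_def using conv0_sw[OF ph2] by simp
  have Q1c: "conv0 Q1" unfolding Q1_def ch_def sigma_def using conv0_sw[OF ph1] by simp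
  have P10: "P1 0 = 0" "Q1 0 = 0" using fix0 by (simp_all add: P1_def Q1_def ch_def sigma_def zero_prod_def)
  have chi: "(P1 z, Q1 z) = ch z" for z by (simp add: P1_def Q1_def)
  define vc where "vc = (\<lambda>z. vs (\<phi> (sigma z)) * vp (sigma z) * vs z)"
  have s1: "conv0 (\<lambda>z. fst (sigma z))" "conv0 (\<lambda>z. snd (sigma z))" "sigma 0 = 0"
    by (simp_all add: sigma_def csnd cfst zero_prod_def)
  have ps1: "conv0 (\<lambda>z. fst (\<phi> (sigma z)))" "conv0 (\<lambda>z. snd (\<phi> (sigma z)))" "\<phi> (sigma 0) = 0"
    using conv0_sw[OF ph1] conv0_sw[OF ph2] fix0 by (simp_all add: sigma_def zero_prod_def)
  have vcc: "conv0 vc" unfolding vc_def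
    by (intro cmult ccomp[OF vs] ccomp[OF vp] vs ps1 s1)
  have Ec: "\<forall>\<^sub>F z in nhds 0. f (ch z) = vc z * f z"
  proof -
    have e1: "\<forall>\<^sub>F z in nhds 0. f (snd (\<phi> (sigma z)), fst (\<phi> (sigma z))) = vs (\<phi> (sigma z)) * f (\<phi> (sigma z))"
      by (rule EV_TRANS[where \<phi>="\<lambda>z. \<phi> (sigma z)", OF Es ps1])
    have e2: "\<forall>\<^sub>F z in nhds 0. f (\<phi> (sigma z)) = vp (sigma z) * f (sigma z)"
      by (rule EV_TRANS[where \<phi>=sigma, OF Ep s1])
    show ?thesis using e1 e2 Es
      by eventually_elim (simp add: ch_def vc_def sigma_def mult_ac)
  qed
  define T1 where "T1 = (\<lambda>a. fcomp a (taylor P1) (taylor Q1))"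
  have T1F: "T1 F = fmult (taylor vc) F"
  proof -
    have "T1 F = taylor (\<lambda>z. f (P1 z, Q1 z))" using F_comp[OF f P1c Q1c P10] by (simp add: T1_def F_def)
    also have "\<dots> = taylor (\<lambda>z. f (ch z))" by (simp add: chi)
    also have "\<dots> = taylor (\<lambda>z. vc z * f z)"
      by (rule taylor_eq[OF _ cmult[OF vcc f] Ec]) (use F_comp[OF f P1c Q1c P10] chi in simp)
    also have "\<dots> = fmult (taylor vc) F" using F_mult[OF vcc f] by (simp add: F_def)
    finally show ?thesis .
  qed
  have inv: "\<forall>\<^sub>F z in nhds 0. (P1 ((fst \<circ> \<phi>) z, (snd \<circ> \<phi>) z), Q1 ((fst \<circ> \<phi>) z, (snd \<circ> \<phi>) z)) = z"
    using rev1 by eventually_elim (simp add: chi ch_def)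
  have PD: "T ` formal_ideal F = formal_ideal F"
  proof
    show "T ` formal_ideal F \<subseteq> formal_ideal F" using incT by (auto simp: formal_ideal_def)
    show "formal_ideal F \<subseteq> T ` formal_ideal F"
    proof
      fix x assume "x \<in> formal_ideal F"
      then obtain w where x: "x = fmult w F" by (auto simp: formal_ideal_def)
      define y where "y = T1 x"
      have "y = fmult (T1 w) (T1 F)" unfolding y_def x T1_def by (rule FCOMP_MULT[OF P1c Q1c P10])
      also have "\<dots> = fmult (fmult (T1 w) (taylor vc)) F" by (simp add: T1F ASSOC)
      finally have yI: "y \<in> formal_ideal F" by (auto simp: formal_ideal_def)
      have "T y = x" unfolding T_def y_def T1_def
        by (rule FCOMP_INV[OF hol P0 P1c Q1c P10 inv])
      then show "x \<in> T ` formal_ideal F" using yI by blast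
    qed
  qed
  show ?thesis using PA PB PC PD by (simp add: F_def T_def)
qed

lemma ITER:
  fixes \<phi> :: "complex \<times> complex \<Rightarrow> complex \<times> complex"
  assumes ph1: "conv0 (\<lambda>z. fst (\<phi> z))" and ph2: "conv0 (\<lambda>z. snd (\<phi> z))" and ph0: "\<phi> 0 = 0"
  shows "conv0 (\<lambda>z. fst ((\<phi> ^^ n) z)) \<and> conv0 (\<lambda>z. snd ((\<phi> ^^ n) z)) \<and> (\<phi> ^^ n) 0 = 0"
proof (induction n)
  case 0 then show ?case by (simp add: cfst csnd)
next
  case (Suc n)
  then have IH: "conv0 (\<lambda>z. fst ((\<phi> ^^ n) z))" "conv0 (\<lambda>z. snd ((\<phi> ^^ n) z))" "(\<phi> ^^ n) 0 = 0" by auto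
  have "conv0 (\<lambda>z. fst (\<phi> ((\<phi> ^^ n) z)))" by (rule ccomp[OF ph1 IH])
  moreover have "conv0 (\<lambda>z. snd (\<phi> ((\<phi> ^^ n) z)))" by (rule ccomp[OF ph2 IH])
  ultimately show ?case using IH(3) ph0 by simp
qed

lemma HPROD_ITER:
  fixes \<phi> :: "complex \<times> complex \<Rightarrow> complex \<times> complex"
  assumes ph1: "conv0 (\<lambda>z. fst (\<phi> z))" and ph2: "conv0 (\<lambda>z. snd (\<phi> z))" and ph0: "\<phi> 0 = 0"
    and hinv: "\<forall>\<^sub>F z in nhds 0. hprod (\<phi> z) = hprod z"
  shows "\<forall>\<^sub>F z in nhds 0. hprod ((\<phi> ^^ n) z) = hprod z"
proof (induction n)
  case 0 then show ?case by simp
next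
  case (Suc n)
  have I: "conv0 (\<lambda>z. fst ((\<phi> ^^ n) z))" "conv0 (\<lambda>z. snd ((\<phi> ^^ n) z))" "(\<phi> ^^ n) 0 = 0"
    using ITER[OF ph1 ph2 ph0, of n] by auto
  have "\<forall>\<^sub>F z in nhds 0. hprod (\<phi> ((\<phi> ^^ n) z)) = hprod ((\<phi> ^^ n) z)"
    by (rule EV_TRANS[where \<phi>="\<phi> ^^ n", OF hinv I])
  then show ?case using Suc by eventually_elim simp
qed

lemma sigma_sigma: "sigma (sigma z) = z" by (simp add: sigma_def)

lemma INV_ITER:
  fixes \<phi> :: "complex \<times> complex \<Rightarrow> complex \<times> complex"
  assumes ph1: "conv0 (\<lambda>z. fst (\<phi> z))" and ph2: "conv0 (\<lambda>z. snd (\<phi> z))" and ph0: "\<phi> 0 = 0"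
    and rev1: "\<forall>\<^sub>F z in nhds 0. sigma (\<phi> (sigma (\<phi> z))) = z"
  shows "\<forall>\<^sub>F z in nhds 0. sigma ((\<phi> ^^ n) (sigma ((\<phi> ^^ n) z))) = z"
proof -
  define ch where "ch = (\<lambda>z. sigma (\<phi> (sigma z)))"
  have chn: "(ch ^^ n) z = sigma ((\<phi> ^^ n) (sigma z))" for n z
    by (induction n arbitrary: z) (simp_all add: ch_def sigma_sigma)
  have "\<forall>\<^sub>F z in nhds 0. (ch ^^ n) ((\<phi> ^^ n) z) = z"
  proof (induction n)
    case 0 then show ?case by simp
  next
    case (Suc n)
    have I: "conv0 (\<lambda>z. fst ((\<phi> ^^ n) z))" "conv0 (\<lambda>z. snd ((\<phi> ^^ n) z))" "(\<phi> ^^ n) 0 = 0"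
      using ITER[OF ph1 ph2 ph0, of n] by auto
    have "\<forall>\<^sub>F z in nhds 0. sigma (\<phi> (sigma (\<phi> ((\<phi> ^^ n) z)))) = (\<phi> ^^ n) z"
      by (rule EV_TRANS[where \<phi>="\<phi> ^^ n", OF rev1 I])
    then show ?case using Suc
    proof eventually_elim
      case (elim z)
      have "(ch ^^ Suc n) ((\<phi> ^^ Suc n) z) = (ch ^^ n) (ch (\<phi> ((\<phi> ^^ n) z)))"
        by (simp add: funpow_Suc_right funpow_swap1 del: funpow.simps)
      also have "\<dots> = (ch ^^ n) ((\<phi> ^^ n) z)" using elim(1) by (simp add: ch_def)
      finally show ?case using elim(2) by simp
    qed
  qed
  then show ?thesis by (simp add: chn)
qed

theorem mainTheorem15:
  fixes \<phi> :: "complex \<times> complex \<Rightarrow> complex \<times> complex" and p :: nat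
  assumes hol: "conv0 (fst \<circ> \<phi>)" "conv0 (snd \<circ> \<phi>)"
    and fix0: "\<phi> 0 = 0"
    and rev: "\<forall>\<^sub>F \<xi> in nhds 0. sigma (\<phi> (sigma (\<phi> \<xi>))) = \<xi>"
             "\<forall>\<^sub>F \<xi> in nhds 0. \<phi> (sigma (\<phi> (sigma \<xi>))) = \<xi>"
    and hinv: "\<forall>\<^sub>F \<xi> in nhds 0. hprod (\<phi> \<xi>) = hprod \<xi>"
    and lin: "(\<exists>l::complex. l \<noteq> 0 \<and>
                 (\<phi> has_derivative (\<lambda>\<xi>. (l * fst \<xi>, snd \<xi> / l))) (at 0))
              \<or> (\<phi> has_derivative (\<lambda>\<xi>. - sigma \<xi>)) (at 0)"
    and p: "p \<ge> 1"
    and tangent: "((\<phi> ^^ p) has_derivative id) (at 0)"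
    and nontriv: "\<not> (\<forall>\<^sub>F \<xi> in nhds 0. (\<phi> ^^ p) \<xi> = \<xi>)"
  shows "(\<exists>f. conv0 f \<and>
            (\<forall>\<^sub>F \<xi> in nhds 0. fst \<xi> * f \<xi> = fst ((\<phi> ^^ p) \<xi>) - fst \<xi>))
       \<and> (\<forall>f. conv0 f \<and>
            (\<forall>\<^sub>F \<xi> in nhds 0. fst \<xi> * f \<xi> = fst ((\<phi> ^^ p) \<xi>) - fst \<xi>) \<longrightarrow>
            (\<lambda>a. a \<circ> sigma) ` conv_ideal f = conv_ideal f
          \<and> germ_set_eq ((\<lambda>a. a \<circ> \<phi>) ` conv_ideal f) (conv_ideal f)
          \<and> fswap ` formal_ideal (taylor f) = formal_ideal (taylor f)
          \<and> (\<lambda>a. fcomp a (taylor (fst \<circ> \<phi>)) (taylor (snd \<circ> \<phi>))) ` formal_ideal (taylor f)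
              = formal_ideal (taylor f))"
proof -
  have ph1: "conv0 (\<lambda>z. fst (\<phi> z))" using hol(1) by (simp add: o_def)
  have ph2: "conv0 (\<lambda>z. snd (\<phi> z))" using hol(2) by (simp add: o_def)
  define \<psi> where "\<psi> = \<phi> ^^ p"
  have ps: "conv0 (\<lambda>z. fst (\<psi> z))" "conv0 (\<lambda>z. snd (\<psi> z))" "\<psi> 0 = 0"
    using ITER[OF ph1 ph2 fix0, of p] by (auto simp: \<psi>_def)
  have hp: "\<forall>\<^sub>F z in nhds 0. hprod (\<psi> z) = hprod z"
    unfolding \<psi>_def by (rule HPROD_ITER[OF ph1 ph2 fix0 hinv])
  have tg: "\<forall>\<^sub>F z in nhds 0. norm (\<psi> z - id z) \<le> 1/2 * norm z"
    unfolding \<psi>_def by (rule DERIV_EV[OF tangent]) (use ITER[OF ph1 ph2 fix0, of p] in auto)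
  have ax1: "\<forall>\<^sub>F z in nhds 0. fst z = 0 \<longrightarrow> fst (\<psi> z) = 0"
    using hp tg
  proof eventually_elim
    case (elim z)
    show ?case
    proof
      assume z1: "fst z = 0"
      have prod0: "fst (\<psi> z) * snd (\<psi> z) = 0" using elim(1) z1 by (simp add: hprod_def)
      show "fst (\<psi> z) = 0"
      proof (cases "snd z = 0")
        case True
        then have "z = 0" using z1 by (simp add: prod_eq_iff)
        then show ?thesis using ps(3) by simp
      next
        case False
        have nz: "norm z = norm (snd z)" using z1 norm0a[of "snd z"] by (metis prod.collapse)
        have "norm (snd (\<psi> z) - snd z) \<le> norm (\<psi> z - z)" by (rule sndL)
        also have "\<dots> \<le> 1/2 * norm (snd z)" using elim(2) nz by simp
        finally have a: "norm (snd (\<psi> z) - snd z) \<le> norm (snd z) / 2" by simp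
        have "norm (snd z) > 0" using False by simp
        then have "snd (\<psi> z) \<noteq> 0" using a by auto
        then show ?thesis using prod0 by simp
      qed
    qed
  qed
  have ax2: "\<forall>\<^sub>F z in nhds 0. snd z = 0 \<longrightarrow> snd (\<psi> z) = 0"
    using hp tg
  proof eventually_elim
    case (elim z)
    show ?case
    proof
      assume z2: "snd z = 0"
      have prod0: "fst (\<psi> z) * snd (\<psi> z) = 0" using elim(1) z2 by (simp add: hprod_def)
      show "snd (\<psi> z) = 0"
      proof (cases "fst z = 0")
        case True
        then have "z = 0" using z2 by (simp add: prod_eq_iff)
        then show ?thesis using ps(3) by simp
      next
        case False
        have nz: "norm z = norm (fst z)" using z2 norm0b[of "fst z"] by (metis prod.collapse)
        have "norm (fst (\<psi> z) - fst z) \<le> norm (\<psi> z - z)" by (rule fstL)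
        also have "\<dots> \<le> 1/2 * norm (fst z)" using elim(2) nz by simp
        finally have a: "norm (fst (\<psi> z) - fst z) \<le> norm (fst z) / 2" by simp
        have "norm (fst z) > 0" using False by simp
        then have "fst (\<psi> z) \<noteq> 0" using a by auto
        then show ?thesis using prod0 by simp
      qed
    qed
  qed
  obtain G1 where G1: "conv0 G1" "\<forall>\<^sub>F z in nhds 0. fst (\<psi> z) = fst z * G1 z"
    using F_divX[OF ps(1) ax1] by blast
  obtain G2 where G2: "conv0 G2" "\<forall>\<^sub>F z in nhds 0. snd (\<psi> z) = snd z * G2 z"
    using F_divY[OF ps(2) ax2] by blast
  have part1: "\<exists>f. conv0 f \<and> (\<forall>\<^sub>F \<xi> in nhds 0. fst \<xi> * f \<xi> = fst (\<psi> \<xi>) - fst \<xi>)"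
  proof (intro exI conjI)
    show "conv0 (\<lambda>z. G1 z - 1)" by (rule cdiff[OF G1(1) c1])
    show "\<forall>\<^sub>F \<xi> in nhds 0. fst \<xi> * (G1 \<xi> - 1) = fst (\<psi> \<xi>) - fst \<xi>"
      using G1(2) by eventually_elim (simp add: algebra_simps)
  qed
  have part2: "(\<lambda>a. a \<circ> sigma) ` conv_ideal f = conv_ideal f
          \<and> germ_set_eq ((\<lambda>a. a \<circ> \<phi>) ` conv_ideal f) (conv_ideal f)
          \<and> fswap ` formal_ideal (taylor f) = formal_ideal (taylor f)
          \<and> (\<lambda>a. fcomp a (taylor (fst \<circ> \<phi>)) (taylor (snd \<circ> \<phi>))) ` formal_ideal (taylor f)
              = formal_ideal (taylor f)"
    if f: "conv0 f" and Ef: "\<forall>\<^sub>F \<xi> in nhds 0. fst \<xi> * f \<xi> = fst (\<psi> \<xi>) - fst \<xi>" for f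
  proof -
    define g where "g = (\<lambda>z. G2 z - 1)"
    have g: "conv0 g" unfolding g_def by (rule cdiff[OF G2(1) c1])
    have hf: "\<forall>\<^sub>F z in nhds 0. fst (\<psi> z) = fst z * (1 + f z)"
      using Ef by eventually_elim (simp add: algebra_simps)
    have hg: "\<forall>\<^sub>F z in nhds 0. snd (\<psi> z) = snd z * (1 + g z)"
      using G2(2) by eventually_elim (simp add: g_def)
    have "\<forall>\<^sub>F z in nhds 0. fst z * (snd z * ((1 + f z) * (1 + g z))) = fst z * snd z"
      using hp hf hg by eventually_elim (simp add: hprod_def mult_ac)
    then have "\<forall>\<^sub>F z in nhds 0. snd z * ((1 + f z) * (1 + g z)) = snd z"
      by (rule F_cancelX[OF cmult[OF csnd cmult[OF cadd[OF c1 f] cadd[OF c1 g]]] csnd])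
    then have "\<forall>\<^sub>F z in nhds 0. snd z * ((1 + f z) * (1 + g z)) = snd z * 1" by simp
    then have fg: "\<forall>\<^sub>F z in nhds 0. (1 + f z) * (1 + g z) = 1"
      by (rule F_cancelY[OF cmult[OF cadd[OF c1 f] cadd[OF c1 g]] c1])
    have gf: "\<forall>\<^sub>F z in nhds 0. g z = - f z * (1 + g z)"
      using fg
    proof eventually_elim
      case (elim z)
      have "g z = (1 + g z) - (1 + f z) * (1 + g z)" using elim by simp
      also have "\<dots> = - f z * (1 + g z)" by (simp add: algebra_simps)
      finally show ?case .
    qed
    have comm: "\<psi> (\<phi> z) = \<phi> (\<psi> z)" for z by (simp add: \<psi>_def funpow_swap1)
    have inv: "\<forall>\<^sub>F z in nhds 0. sigma (\<psi> (sigma (\<psi> z))) = z"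
      unfolding \<psi>_def by (rule INV_ITER[OF ph1 ph2 fix0 rev(1)])
    obtain vs where vs: "conv0 vs" "\<forall>\<^sub>F z in nhds 0. f (snd z, fst z) = vs z * f z"
      using F2L[OF f g hf hg fg gf ps inv] by blast
    obtain vp where vp: "conv0 vp" "\<forall>\<^sub>F z in nhds 0. f (\<phi> z) = vp z * f z"
      using lin
    proof
      assume "\<exists>l::complex. l \<noteq> 0 \<and> (\<phi> has_derivative (\<lambda>\<xi>. (l * fst \<xi>, snd \<xi> / l))) (at 0)"
      then obtain l where l: "l \<noteq> 0" "(\<phi> has_derivative (\<lambda>\<xi>. (l * fst \<xi>, snd \<xi> / l))) (at 0)" by blast
      show ?thesis using F3D[OF f g hf hg gf ph1 ph2 fix0 ps comm hinv l] that by blast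
    next
      assume d: "(\<phi> has_derivative (\<lambda>\<xi>. - sigma \<xi>)) (at 0)"
      show ?thesis using F3S[OF f g hf hg gf ph1 ph2 fix0 ps comm hinv d] that by blast
    qed
    show ?thesis by (rule CONCL[OF hol fix0 rev(1) f vs vp])
  qed
  show ?thesis using part1 part2 unfolding \<psi>_def by blast
qed

end
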